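(* Let $x\le w$ in $W$ with $\ell(w)-\ell(x)=d\ge1$, $\mathfrak w=s_1\cdots s_n$ a reduced word of $w$, $\lambda(\mathscr C^+_{x,\mathfrak w})=(i_1,\ldots,i_d)$ and $\lambda(\mathscr C^-_{x,\mathfrak w})^*=(j_1,\ldots,j_d)$. Let $s_1\mathfrak w=s_2\cdots s_n$, a reduced word of $s_1w$ whose positions are numbered $1,\ldots,n-1$. If $j_1=1$, then $x\le s_1w$ and $\lambda_{x,s_1\mathfrak w}=\{\,i-1 : i\in\lambda_{x,\mathfrak w},\ i\ne1\,\}$. If $i_1>1$, then $s_1x\le s_1w$ and $\lambda_{s_1x,s_1\mathfrak w}\supseteq\{\,i-1 : i\in\lambda_{x,\mathfrak w}\,\}$.
   Context: Let $W$ be the Weyl group of a finite reduced root system, with length $\ell$ and Bruhat order $\le$. For a reduced word $\mathfrak w=s_1\cdots s_n$ of $w$ and $x\le w$, $\lambda_{x,\mathfrak w}$ is the set of positions $i$ with $x\le s_1\cdots\widehat{s_i}\cdots s_n$ (regarded as a set, or as an increasing tuple). Each maximal chain $\mathscr C: w=w_0\to\cdots\to w_d=x$ of Bruhat covers in $[x,w]$ has label $\lambda(\mathscr C)=(i_1,\ldots,i_d)$, the unique sequence of distinct positions such that $w_k$ is obtained from $\mathfrak w$ by deleting $s_{i_1},\ldots,s_{i_k}$. $\mathscr C^+_{x,\mathfrak w}$ (resp. $\mathscr C^-_{x,\mathfrak w}$) is the unique maximal chain with strictly increasing (resp. strictly decreasing) label; by Björner–Wachs shellability these are respectively lexicographically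 smallest and largest. For a tuple $\lambda=(a_1,\ldots,a_d)$, $\lambda^*=(a_d,\ldots,a_1)$. *)

theory Defs
  imports "HOL-Analysis.Analysis"
begin

definition refl :: "'v::euclidean_space \<Rightarrow> 'v \<Rightarrow> 'v" where
  "refl a v = v - (2 * (v \<bullet> a) / (a \<bullet> a)) *\<^sub>R a"

definition root_system :: "'v::euclidean_space set \<Rightarrow> bool" where
  "root_system R \<longleftrightarrow> finite R \<and> 0 \<notin> R \<and> span R = UNIV \<and>
     (\<forall>a\<in>R. \<forall>b\<in>R. refl a b \<in> R \<and> 2 * (b \<bullet> a) / (a \<bullet> a) \<in> \<int>) \<and>
     (\<forall>a\<in>R. \<forall>c::real. c *\<^sub>R a \<in> R \<longrightarrow> c = 1 \<or> c = -1)"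

definition is_base :: "'v::euclidean_space set \<Rightarrow> 'v set \<Rightarrow> bool" where
  "is_base R D \<longleftrightarrow> D \<subseteq> R \<and> independent D \<and>
     (\<forall>b\<in>R. \<exists>c::'v \<Rightarrow> nat.
        b = (\<Sum>d\<in>D. real (c d) *\<^sub>R d) \<or> b = - (\<Sum>d\<in>D. real (c d) *\<^sub>R d))"

inductive_set weyl :: "'v::euclidean_space set \<Rightarrow> ('v \<Rightarrow> 'v) set" for R where
  weyl_id: "id \<in> weyl R"
| weyl_step: "a \<in> R \<Longrightarrow> u \<in> weyl R \<Longrightarrow> refl a \<circ> u \<in> weyl R"

definition prodW :: "('v \<Rightarrow> 'v) list \<Rightarrow> ('v \<Rightarrow> 'v)" where
  "prodW ws = foldr (\<circ>) ws id"

definition ell :: "'v::euclidean_space set \<Rightarrow> ('v \<Rightarrow> 'v) \<Rightarrow> nat" where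
  "ell D w = (LEAST n. \<exists>ws. set ws \<subseteq> refl ` D \<and> length ws = n \<and> prodW ws = w)"

definition reduced_word :: "'v::euclidean_space set \<Rightarrow> ('v \<Rightarrow> 'v) list \<Rightarrow> ('v \<Rightarrow> 'v) \<Rightarrow> bool" where
  "reduced_word D ws w \<longleftrightarrow> set ws \<subseteq> refl ` D \<and> prodW ws = w \<and> length ws = ell D w"

definition bruhat :: "'v::euclidean_space set \<Rightarrow> 'v set \<Rightarrow> ('v \<Rightarrow> 'v) \<Rightarrow> ('v \<Rightarrow> 'v) \<Rightarrow> bool" where
  "bruhat R D x w \<longleftrightarrow> x \<in> weyl R \<and>
     (\<lambda>u v. \<exists>a\<in>R. v = refl a \<circ> u \<and> ell D u < ell D v)\<^sup>*\<^sup>* x w"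

definition bcover :: "'v::euclidean_space set \<Rightarrow> 'v set \<Rightarrow> ('v \<Rightarrow> 'v) \<Rightarrow> ('v \<Rightarrow> 'v) \<Rightarrow> bool" where
  "bcover R D u v \<longleftrightarrow> bruhat R D u v \<and> u \<noteq> v \<and>
     (\<forall>z. bruhat R D u z \<and> bruhat R D z v \<longrightarrow> z = u \<or> z = v)"

definition max_chain :: "'v::euclidean_space set \<Rightarrow> 'v set \<Rightarrow> ('v \<Rightarrow> 'v) list \<Rightarrow> ('v \<Rightarrow> 'v) \<Rightarrow> ('v \<Rightarrow> 'v) \<Rightarrow> bool" where
  "max_chain R D c w x \<longleftrightarrow> c \<noteq> [] \<and> c ! 0 = w \<and> last c = x \<and>
     (\<forall>k. Suc k < length c \<longrightarrow> bcover R D (c ! Suc k) (c ! k))"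

text \<open>Deleting the letters at a set of positions (positions numbered from 1).\<close>
definition del_pos :: "nat set \<Rightarrow> 'a list \<Rightarrow> 'a list" where
  "del_pos P ws = map snd (filter (\<lambda>(i, s). i \<notin> P) (zip [1..<Suc (length ws)] ws))"

definition chain_label :: "('v \<Rightarrow> 'v) list \<Rightarrow> ('v \<Rightarrow> 'v) list \<Rightarrow> nat list \<Rightarrow> bool" where
  "chain_label ws c L \<longleftrightarrow> length L + 1 = length c \<and> distinct L \<and>
     set L \<subseteq> {1..length ws} \<and>
     (\<forall>k < length c. c ! k = prodW (del_pos (set (take k L)) ws))"

definition lam :: "'v::euclidean_space set \<Rightarrow> 'v set \<Rightarrow> ('v \<Rightarrow> 'v) \<Rightarrow> ('v \<Rightarrow> 'v) list \<Rightarrow> nat set" where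
  "lam R D x ws = {i \<in> {1..length ws}. bruhat R D x (prodW (del_pos {i} ws))}"

end

theory Submission
  imports Defs
begin

section \<open>Reflections\<close>

lemma refl_linear: "linear (refl a)"
  unfolding refl_def
  by (rule linearI) (auto simp: inner_add_left algebra_simps add_divide_distrib diff_divide_distrib)

lemma refl_diff: "refl a (u - v) = refl a u - refl a v"
  using linear_diff[OF refl_linear] by blast
lemma refl_scale: "refl a (c *\<^sub>R u) = c *\<^sub>R refl a u"
  using linear_scale[OF refl_linear] by blast
lemma refl_neg: "refl a (- u) = - refl a u"
  using linear_neg[OF refl_linear] by blast

lemma refl_inner_a: "a \<noteq> 0 \<Longrightarrow> refl a v \<bullet> a = - (v \<bullet> a)"
  unfolding refl_def by (simp add: inner_diff_left)

lemma refl_self: "a \<noteq> 0 \<Longrightarrow> refl a a = - a"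
  unfolding refl_def by (simp add: algebra_simps scaleR_2)

lemma refl_refl [simp]: "a \<noteq> 0 \<Longrightarrow> refl a (refl a v) = v"
proof -
  assume a: "a \<noteq> 0"
  have "refl a (refl a v) = refl a v - (2 * (refl a v \<bullet> a) / (a \<bullet> a)) *\<^sub>R a"
    by (simp add: refl_def)
  also have "\<dots> = v" using refl_inner_a[OF a, of v] by (simp add: refl_def)
  finally show ?thesis .
qed

lemma refl_comp_refl: "a \<noteq> 0 \<Longrightarrow> refl a \<circ> refl a = id"
  by (auto simp: fun_eq_iff)

lemma refl_inner: "a \<noteq> 0 \<Longrightarrow> refl a u \<bullet> refl a v = u \<bullet> v"
  unfolding refl_def
  by (simp add: inner_diff_left inner_diff_right algebra_simps inner_commute)

lemma refl_minus: "refl (- a) = refl a"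
  by (auto simp: fun_eq_iff refl_def)

lemma refl_conj:
  assumes b: "b \<noteq> 0"
  shows "refl (refl b a) = refl b \<circ> refl a \<circ> refl b"
proof
  fix v
  have 1: "v \<bullet> refl b a = refl b v \<bullet> a"
    using refl_inner[OF b, of v "refl b a"] b by simp
  have 2: "refl b a \<bullet> refl b a = a \<bullet> a" using refl_inner[OF b] by simp
  have "(refl b \<circ> refl a \<circ> refl b) v = refl b (refl b v - (2 * (refl b v \<bullet> a) / (a \<bullet> a)) *\<^sub>R a)"
    by (simp add: refl_def[of a])
  also have "\<dots> = v - (2 * (refl b v \<bullet> a) / (a \<bullet> a)) *\<^sub>R refl b a"
    using b by (simp add: refl_diff refl_scale)
  also have "\<dots> = refl (refl b a) v" using 1 2 by (simp add: refl_def[of "refl b a"])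
  finally show "refl (refl b a) v = (refl b \<circ> refl a \<circ> refl b) v" by simp
qed

lemma prodW_Nil [simp]: "prodW [] = id" by (simp add: prodW_def)
lemma prodW_Cons [simp]: "prodW (s # ws) = s \<circ> prodW ws" by (simp add: prodW_def)
lemma prodW_append: "prodW (xs @ ys) = prodW xs \<circ> prodW ys"
  by (induction xs) (auto simp: o_assoc)
lemma prodW_snoc: "prodW (xs @ [s]) = prodW xs \<circ> s"
  by (simp add: prodW_append)

lemma prodW_rev_inv:
  assumes "\<forall>s\<in>set ws. s \<circ> s = id"
  shows "prodW (rev ws) \<circ> prodW ws = id" "prodW ws \<circ> prodW (rev ws) = id"
proof -
  have "prodW (rev ws) \<circ> prodW ws = id \<and> prodW ws \<circ> prodW (rev ws) = id" using assms
  proof (induction ws)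
    case Nil then show ?case by simp
  next
    case (Cons s ws)
    have s: "s \<circ> s = id" using Cons.prems by (meson list.set_intros(1))
    have ws: "\<forall>s\<in>set ws. s \<circ> s = id" using Cons.prems by (meson list.set_intros(2))
    have ih: "prodW (rev ws) \<circ> prodW ws = id" "prodW ws \<circ> prodW (rev ws) = id"
      using Cons.IH[OF ws] by blast+
    have 1: "prodW (rev (s # ws)) \<circ> prodW (s # ws) = id"
    proof -
      have "prodW (rev (s # ws)) \<circ> prodW (s # ws) = prodW (rev ws) \<circ> (s \<circ> s) \<circ> prodW ws"
        by (simp add: prodW_append o_assoc)
      also have "\<dots> = id" using s ih by simp
      finally show ?thesis .
    qed
    have 2: "prodW (s # ws) \<circ> prodW (rev (s # ws)) = id"
    proof -
      have "prodW (s # ws) \<circ> prodW (rev (s # ws)) = s \<circ> (prodW ws \<circ> prodW (rev ws)) \<circ> s"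
        by (simp add: prodW_append o_assoc)
      also have "\<dots> = id" using s ih by simp
      finally show ?thesis .
    qed
    show ?case using 1 2 by blast
  qed
  then show "prodW (rev ws) \<circ> prodW ws = id" "prodW ws \<circ> prodW (rev ws) = id" by blast+
qed

locale rs =
  fixes R D :: "'v::euclidean_space set"
  assumes rs: "root_system R" and base: "is_base R D"
begin

lemma finR: "finite R" and zR: "0 \<notin> R" and reflR: "a \<in> R \<Longrightarrow> b \<in> R \<Longrightarrow> refl a b \<in> R"
  and redR: "a \<in> R \<Longrightarrow> c *\<^sub>R a \<in> R \<Longrightarrow> c = 1 \<or> c = -1"
  using rs unfolding root_system_def by auto

lemma DR: "D \<subseteq> R" and indep: "independent D"
  and base_rep: "b \<in> R \<Longrightarrow> \<exists>c::'v \<Rightarrow> nat. b = (\<Sum>d\<in>D. real (c d) *\<^sub>R d) \<or> b = - (\<Sum>d\<in>D. real (c d) *\<^sub>R d)"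
  using base unfolding is_base_def by auto

lemma finD: "finite D" using indep independent_explicit by blast

lemma zD: "0 \<notin> D" using DR zR by auto

lemma nzR: "a \<in> R \<Longrightarrow> a \<noteq> 0" using zR by auto
lemma nzD: "a \<in> D \<Longrightarrow> a \<noteq> 0" using zD by auto

lemma negR: "a \<in> R \<Longrightarrow> - a \<in> R"
  using reflR[of a a] refl_self[of a] nzR by auto

lemma uniq:
  assumes "(\<Sum>d\<in>D. f d *\<^sub>R d) = (\<Sum>d\<in>D. g d *\<^sub>R d)" "x \<in> D"
  shows "f x = g x"
proof -
  have "(\<Sum>d\<in>D. (f d - g d) *\<^sub>R d) = 0"
    using assms(1) by (simp add: scaleR_diff_left sum_subtractf)
  moreover have H: "\<And>c v. (\<Sum>v\<in>D. c v *\<^sub>R v) = 0 \<Longrightarrow> v \<in> D \<Longrightarrow> c v = 0"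
    using indep unfolding independent_explicit by blast
  ultimately have "f x - g x = 0" using assms(2) H[of "\<lambda>d. f d - g d" x] by blast
  then show ?thesis by simp
qed

definition pos :: "'v \<Rightarrow> bool" where
  "pos b \<longleftrightarrow> b \<in> R \<and> (\<exists>c::'v \<Rightarrow> nat. b = (\<Sum>d\<in>D. real (c d) *\<^sub>R d))"

definition neg :: "'v \<Rightarrow> bool" where
  "neg b \<longleftrightarrow> pos (- b)"

lemma pos_R: "pos b \<Longrightarrow> b \<in> R" by (simp add: pos_def)
lemma neg_R: "neg b \<Longrightarrow> b \<in> R" using negR[of "-b"] by (simp add: neg_def pos_def)

lemma pos_or_neg: "b \<in> R \<Longrightarrow> pos b \<or> neg b"
  using base_rep[of b] negR[of b] by (auto simp: pos_def neg_def)

lemma not_pos_neg: "pos b \<Longrightarrow> neg b \<Longrightarrow> False"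
proof -
  assume "pos b" "neg b"
  then obtain c e :: "'v \<Rightarrow> nat" where b: "b \<in> R" "b = (\<Sum>d\<in>D. real (c d) *\<^sub>R d)"
    and e: "- b = (\<Sum>d\<in>D. real (e d) *\<^sub>R d)" by (auto simp: pos_def neg_def)
  have "(\<Sum>d\<in>D. (real (c d) + real (e d)) *\<^sub>R d) = (\<Sum>d\<in>D. 0 *\<^sub>R d)"
    using b e[symmetric] by (simp add: scaleR_add_left sum.distrib)
  then have "\<forall>d\<in>D. real (c d) + real (e d) = 0" using uniq[of "\<lambda>d. real (c d) + real (e d)" "\<lambda>d. 0"] by auto
  then have "\<forall>d\<in>D. c d = 0" by auto
  then have "b = 0" using b by simp
  then show False using b zR by simp
qed

lemma neg_iff: "b \<in> R \<Longrightarrow> neg b \<longleftrightarrow> \<not> pos b"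
  using pos_or_neg not_pos_neg by blast

lemma sum_delta_D: "d \<in> D \<Longrightarrow> (\<Sum>x\<in>D. (if x = d then k else 0) *\<^sub>R x) = k *\<^sub>R d"
proof -
  assume d: "d \<in> D"
  have "(\<Sum>x\<in>D. (if x = d then k else 0) *\<^sub>R x) = (\<Sum>x\<in>D. if x = d then k *\<^sub>R d else 0)"
    by (rule sum.cong) auto
  also have "\<dots> = k *\<^sub>R d" using d finD by simp
  finally show ?thesis .
qed

lemma pos_D: "d \<in> D \<Longrightarrow> pos d"
  unfolding pos_def
proof
  assume d: "d \<in> D"
  then show "d \<in> R" using DR by auto
  show "\<exists>c::'v \<Rightarrow> nat. d = (\<Sum>x\<in>D. real (c x) *\<^sub>R x)"
    by (rule exI[of _ "\<lambda>x. if x = d then 1 else 0"]) (use sum_delta_D[OF d, of 1] in \<open>simp add: if_distrib cong: if_cong\<close>)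
qed

lemma key:
  assumes d: "d \<in> D" and b: "pos b" and bd: "b \<noteq> d"
  shows "pos (refl d b)"
proof (rule ccontr)
  assume npos: "\<not> pos (refl d b)"
  obtain c :: "'v \<Rightarrow> nat" where bR: "b \<in> R" and bc: "b = (\<Sum>x\<in>D. real (c x) *\<^sub>R x)"
    using b by (auto simp: pos_def)
  have dR: "d \<in> R" using d DR by auto
  have ex: "\<exists>d'\<in>D. d' \<noteq> d \<and> c d' > 0"
  proof (rule ccontr)
    assume "\<not> ?thesis"
    then have "\<forall>x\<in>D. x \<noteq> d \<longrightarrow> c x = 0" by auto
    then have "b = (\<Sum>x\<in>D. (if x = d then real (c d) else 0) *\<^sub>R x)"
      unfolding bc by (intro sum.cong) auto
    also have "\<dots> = real (c d) *\<^sub>R d" using sum_delta_D[OF d] by simp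
    finally have bd': "b = real (c d) *\<^sub>R d" .
    have "real (c d) *\<^sub>R d \<in> R" using bR bd' by simp
    from redR[OF dR this] have "real (c d) = 1 \<or> real (c d) = -1" .
    then have "real (c d) = 1" by auto
    then show False using bd' bd by simp
  qed
  then obtain d' where d': "d' \<in> D" "d' \<noteq> d" "c d' > 0" by blast
  have rR: "refl d b \<in> R" using reflR[OF dR bR] .
  then have "neg (refl d b)" using pos_or_neg npos by blast
  then obtain e :: "'v \<Rightarrow> nat" where e: "- refl d b = (\<Sum>x\<in>D. real (e x) *\<^sub>R x)"
    by (auto simp: neg_def pos_def)
  define k where "k = 2 * (b \<bullet> d) / (d \<bullet> d)"
  have rb: "refl d b = b - k *\<^sub>R d" by (simp add: refl_def k_def)
  have "(\<Sum>x\<in>D. (real (c x) - (if x = d then k else 0) + real (e x)) *\<^sub>R x)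
      = (\<Sum>x\<in>D. real (c x) *\<^sub>R x) - (\<Sum>x\<in>D. (if x = d then k else 0) *\<^sub>R x) + (\<Sum>x\<in>D. real (e x) *\<^sub>R x)"
    by (simp add: scaleR_add_left scaleR_diff_left sum.distrib sum_subtractf)
  also have "\<dots> = 0" using sum_delta_D[OF d, of k] e[symmetric] bc[symmetric] rb by simp
  finally have "(\<Sum>x\<in>D. (real (c x) - (if x = d then k else 0) + real (e x)) *\<^sub>R x) = (\<Sum>x\<in>D. 0 *\<^sub>R x)"
    by simp
  from uniq[OF this d'(1)] have "real (c d') + real (e d') = 0" using d'(2) by simp
  then show False using d'(3) by simp
qed

abbreviation wd :: "('v \<Rightarrow> 'v) list \<Rightarrow> bool" where
  "wd ws \<equiv> set ws \<subseteq> refl ` D"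

lemma wd_invol: "wd ws \<Longrightarrow> \<forall>s\<in>set ws. s \<circ> s = id"
  using refl_comp_refl nzD by auto

lemma wd_inv: "wd ws \<Longrightarrow> prodW (rev ws) \<circ> prodW ws = id"
  "wd ws \<Longrightarrow> prodW ws \<circ> prodW (rev ws) = id"
  using prodW_rev_inv wd_invol by blast+

lemma wd_inv_ap [simp]: "wd ws \<Longrightarrow> prodW (rev ws) (prodW ws v) = v"
  "wd ws \<Longrightarrow> prodW ws (prodW (rev ws) v) = v"
  using wd_inv by (metis comp_apply id_apply)+

lemma wd_rev: "wd ws \<Longrightarrow> wd (rev ws)" by simp

lemma wd_neg: "wd ws \<Longrightarrow> prodW ws (- v) = - prodW ws v"
  by (induction ws) (auto simp: refl_neg)

lemma wd_R: "wd ws \<Longrightarrow> a \<in> R \<Longrightarrow> prodW ws a \<in> R"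
  by (induction ws) (use DR reflR in auto)

lemma wd_conj: "wd p \<Longrightarrow> refl (prodW p a) = prodW p \<circ> refl a \<circ> prodW (rev p)"
proof (induction p)
  case Nil then show ?case by simp
next
  case (Cons s p)
  then obtain b where b: "b \<in> D" "s = refl b" by auto
  have "refl (prodW (s # p) a) = refl b \<circ> refl (prodW p a) \<circ> refl b"
    using b refl_conj[of b] nzD by simp
  also have "\<dots> = prodW (s # p) \<circ> refl a \<circ> prodW (rev (s # p))"
    using Cons b by (simp add: fun_eq_iff prodW_append)
  finally show ?case .
qed

lemma height:
  "pos b \<Longrightarrow> \<exists>p d. wd p \<and> d \<in> D \<and> b = prodW p d"
proof -
  have "\<forall>b c. pos b \<and> b = (\<Sum>x\<in>D. real (c x) *\<^sub>R x) \<and> sum c D = n \<longrightarrow> (\<exists>p d. wd p \<and> d \<in> D \<and> b = prodW p d)" for n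
  proof (induction n rule: less_induct)
    case (less n)
    show ?case
    proof (intro allI impI)
      fix b and c :: "'v \<Rightarrow> nat"
      assume H: "pos b \<and> b = (\<Sum>x\<in>D. real (c x) *\<^sub>R x) \<and> sum c D = n"
      then have bR: "b \<in> R" and bc: "b = (\<Sum>x\<in>D. real (c x) *\<^sub>R x)" and n: "sum c D = n"
        by (auto simp: pos_def)
      show "\<exists>p d. wd p \<and> d \<in> D \<and> b = prodW p d"
      proof (cases "b \<in> D")
        case True then show ?thesis by (intro exI[of _ "[]"] exI[of _ b]) simp
      next
        case False
        have "0 < b \<bullet> b" using nzR[OF bR] by simp
        also have "b \<bullet> b = (\<Sum>x\<in>D. real (c x) * (b \<bullet> x))"
          by (subst (2) bc) (simp add: inner_sum_right)
        finally have sp: "0 < (\<Sum>x\<in>D. real (c x) * (b \<bullet> x))" .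
        have "\<exists>x\<in>D. 0 < real (c x) * (b \<bullet> x)"
        proof (rule ccontr)
          assume "\<not> ?thesis"
          then have "(\<Sum>x\<in>D. real (c x) * (b \<bullet> x)) \<le> 0" by (intro sum_nonpos) auto
          then show False using sp by simp
        qed
        then obtain x where x: "x \<in> D" "c x > 0" "b \<bullet> x > 0"
          by (auto simp: zero_less_mult_iff)
        have xb: "b \<noteq> x" using False x by auto
        have p': "pos (refl x b)" using key[OF x(1) H[THEN conjunct1] xb] .
        then obtain c' :: "'v \<Rightarrow> nat" where c': "refl x b = (\<Sum>y\<in>D. real (c' y) *\<^sub>R y)"
          by (auto simp: pos_def)
        define k where "k = 2 * (b \<bullet> x) / (x \<bullet> x)"
        have kpos: "k > 0" using x nzD[OF x(1)] by (simp add: k_def)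
        have rb: "refl x b = b - k *\<^sub>R x" by (simp add: refl_def k_def)
        have "(\<Sum>y\<in>D. (real (c y) - (if y = x then k else 0)) *\<^sub>R y)
            = (\<Sum>y\<in>D. real (c y) *\<^sub>R y) - (\<Sum>y\<in>D. (if y = x then k else 0) *\<^sub>R y)"
          by (simp add: scaleR_diff_left sum_subtractf)
        also have "\<dots> = refl x b" using sum_delta_D[OF x(1), of k] bc rb by simp
        finally have "(\<Sum>y\<in>D. (real (c y) - (if y = x then k else 0)) *\<^sub>R y) = (\<Sum>y\<in>D. real (c' y) *\<^sub>R y)"
          using c' by simp
        then have eq: "\<forall>y\<in>D. real (c' y) = real (c y) - (if y = x then k else 0)"
          using uniq[of "\<lambda>y. real (c y) - (if y = x then k else 0)" "\<lambda>y. real (c' y)"] by auto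
        have "real (sum c' D) = (\<Sum>y\<in>D. real (c y) - (if y = x then k else 0))"
          by (simp add: eq)
        also have "\<dots> = real (sum c D) - k"
          using x(1) finD by (simp add: sum_subtractf)
        finally have "sum c' D < n" using kpos n by linarith
        with less.IH obtain p d where pd: "wd p" "d \<in> D" "refl x b = prodW p d"
          using p' c' by blast
        have "b = refl x (refl x b)" using nzD[OF x(1)] by simp
        also have "\<dots> = prodW (refl x # p) d" using pd by simp
        finally show ?thesis using pd x(1) by (intro exI[of _ "refl x # p"] exI[of _ d]) auto
      qed
    qed
  qed
  note A = this
  assume H: "pos b"
  then obtain c :: "'v \<Rightarrow> nat" where "b = (\<Sum>x\<in>D. real (c x) *\<^sub>R x)" by (auto simp: pos_def)
  then show "\<exists>p d. wd p \<and> d \<in> D \<and> b = prodW p d" using A[rule_format, where n="sum c D" and b=b and c=c] H by blast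
qed

lemma refl_word: "a \<in> R \<Longrightarrow> \<exists>ws. wd ws \<and> refl a = prodW ws"
proof -
  assume a: "a \<in> R"
  obtain b where b: "pos b" "refl a = refl b"
    using pos_or_neg[OF a] refl_minus[of a] by (metis neg_def minus_minus)
  then obtain p d where pd: "wd p" "d \<in> D" "b = prodW p d" using height by blast
  have "refl a = prodW (p @ [refl d] @ rev p)"
    using b pd wd_conj[OF pd(1)] by (simp add: prodW_append o_assoc)
  then show ?thesis using pd by (intro exI[of _ "p @ [refl d] @ rev p"]) auto
qed

lemma weyl_word: "u \<in> weyl R \<Longrightarrow> \<exists>ws. wd ws \<and> prodW ws = u"
proof (induction rule: weyl.induct)
  case weyl_id then show ?case by (intro exI[of _ "[]"]) simp
next
  case (weyl_step a u)
  then obtain ws where ws: "wd ws" "prodW ws = u" by blast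
  obtain p where p: "wd p" "refl a = prodW p" using refl_word[OF weyl_step(1)] by blast
  show ?case using ws p by (intro exI[of _ "p @ ws"]) (simp add: prodW_append)
qed

lemma word_weyl: "wd ws \<Longrightarrow> prodW ws \<in> weyl R"
proof (induction ws)
  case Nil then show ?case by (metis prodW_Nil weyl.weyl_id)
next
  case (Cons s ws)
  then obtain d where "d \<in> D" "s = refl d" by auto
  moreover have "prodW ws \<in> weyl R" using Cons by simp
  moreover have "d \<in> R" using DR calculation by auto
  ultimately have "refl d \<circ> prodW ws \<in> weyl R" using weyl.weyl_step by blast
  then show ?case using \<open>s = refl d\<close> by (simp only: prodW_Cons)
qed

lemma ell_le: "wd ws \<Longrightarrow> ell D (prodW ws) \<le> length ws"
  unfolding ell_def by (rule Least_le) blast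

lemma ell_red: "u \<in> weyl R \<Longrightarrow> \<exists>ws. wd ws \<and> length ws = ell D u \<and> prodW ws = u"
proof -
  assume "u \<in> weyl R"
  then obtain ws where "wd ws" "prodW ws = u" using weyl_word by blast
  then have "\<exists>n ws. wd ws \<and> length ws = n \<and> prodW ws = u" by blast
  then show ?thesis unfolding ell_def by (rule LeastI_ex)
qed

lemma weyl_left: "u \<in> weyl R \<Longrightarrow> d \<in> D \<Longrightarrow> refl d \<circ> u \<in> weyl R"
  using weyl.weyl_step DR by blast

lemma weyl_leftR: "u \<in> weyl R \<Longrightarrow> a \<in> R \<Longrightarrow> refl a \<circ> u \<in> weyl R"
  using weyl.weyl_step by blast

lemma weyl_right: "u \<in> weyl R \<Longrightarrow> d \<in> D \<Longrightarrow> u \<circ> refl d \<in> weyl R"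
proof -
  assume "u \<in> weyl R" "d \<in> D"
  then obtain ws where "wd ws" "prodW ws = u" using weyl_word by blast
  then have "u \<circ> refl d = prodW (ws @ [refl d])" by (simp add: prodW_append)
  then show ?thesis using word_weyl \<open>wd ws\<close> \<open>d \<in> D\<close> by simp
qed

lemma ell_left_le: "u \<in> weyl R \<Longrightarrow> d \<in> D \<Longrightarrow> ell D (refl d \<circ> u) \<le> ell D u + 1"
proof -
  assume "u \<in> weyl R" "d \<in> D"
  then obtain ws where ws: "wd ws" "length ws = ell D u" "prodW ws = u" using ell_red by blast
  have "ell D (prodW (refl d # ws)) \<le> length (refl d # ws)" using ws \<open>d \<in> D\<close> by (intro ell_le) auto
  then show ?thesis using ws by simp
qed

lemma ell_right_le: "u \<in> weyl R \<Longrightarrow> d \<in> D \<Longrightarrow> ell D (u \<circ> refl d) \<le> ell D u + 1"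
proof -
  assume "u \<in> weyl R" "d \<in> D"
  then obtain ws where ws: "wd ws" "length ws = ell D u" "prodW ws = u" using ell_red by blast
  have "ell D (prodW (ws @ [refl d])) \<le> length (ws @ [refl d])" using ws \<open>d \<in> D\<close> by (intro ell_le) auto
  then show ?thesis using ws by (simp add: prodW_append)
qed

lemma left_invol: "d \<in> D \<Longrightarrow> refl d \<circ> (refl d \<circ> u) = u"
  using nzD by (auto simp: fun_eq_iff)
lemma right_invol: "d \<in> D \<Longrightarrow> (u \<circ> refl d) \<circ> refl d = u"
  using nzD by (auto simp: fun_eq_iff)

lemma ell_left_ge: "u \<in> weyl R \<Longrightarrow> d \<in> D \<Longrightarrow> ell D u \<le> ell D (refl d \<circ> u) + 1"
  using ell_left_le[of "refl d \<circ> u" d] weyl_left left_invol by metis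
lemma ell_right_ge: "u \<in> weyl R \<Longrightarrow> d \<in> D \<Longrightarrow> ell D u \<le> ell D (u \<circ> refl d) + 1"
  using ell_right_le[of "u \<circ> refl d" d] weyl_right right_invol by metis

section \<open>Exchange\<close>

lemma exch:
  "wd ws \<Longrightarrow> pos b \<Longrightarrow> neg (prodW (rev ws) b) \<Longrightarrow>
    \<exists>i<length ws. refl b \<circ> prodW ws = prodW (take i ws @ drop (Suc i) ws)"
proof (induction ws arbitrary: b)
  case Nil then show ?case using not_pos_neg by simp
next
  case (Cons s ws)
  then obtain a where a: "a \<in> D" "s = refl a" and ws: "wd ws" by auto
  have a0: "a \<noteq> 0" using nzD a by auto
  show ?case
  proof (cases "b = a")
    case True
    then show ?thesis using a a0 by (intro exI[of _ 0]) (auto simp: fun_eq_iff)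
  next
    case False
    have pb: "pos (refl a b)" using key[OF a(1) Cons.prems(2) False] .
    have "neg (prodW (rev ws) (refl a b))" using Cons.prems(3) a by (simp add: prodW_append)
    from Cons.IH[OF ws pb this] obtain i where i: "i < length ws"
      "refl (refl a b) \<circ> prodW ws = prodW (take i ws @ drop (Suc i) ws)" by blast
    have "refl b \<circ> prodW (s # ws) = refl a \<circ> (refl (refl a b) \<circ> prodW ws)"
      using a a0 refl_conj[OF a0, of b] by (simp add: fun_eq_iff)
    also have "\<dots> = prodW (take (Suc i) (s # ws) @ drop (Suc (Suc i)) (s # ws))"
      using i a by simp
    finally have "refl b \<circ> prodW (s # ws) = prodW (take (Suc i) (s # ws) @ drop (Suc (Suc i)) (s # ws))" .
    moreover have "Suc i < length (s # ws)" using i by simp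
    ultimately show ?thesis by blast
  qed
qed

lemma rev_cong: "wd ws1 \<Longrightarrow> wd ws2 \<Longrightarrow> prodW ws1 = prodW ws2 \<Longrightarrow> prodW (rev ws1) x = prodW (rev ws2) x"
proof -
  assume h: "wd ws1" "wd ws2" "prodW ws1 = prodW ws2"
  have "prodW (rev ws1) x = prodW (rev ws1) (prodW ws2 (prodW (rev ws2) x))" using h(2) by simp
  also have "\<dots> = prodW (rev ws1) (prodW ws1 (prodW (rev ws2) x))" using h(3) by simp
  also have "\<dots> = prodW (rev ws2) x" using h(1) by simp
  finally show ?thesis .
qed

lemma wd_del: "wd ws \<Longrightarrow> wd (take i ws @ drop (Suc i) ws)"
  using set_take_subset set_drop_subset by fastforce

lemma len_del: "i < length ws \<Longrightarrow> length (take i ws @ drop (Suc i) ws) = length ws - 1"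
  by simp

lemma crit_pos:
  assumes ws: "wd ws" and b: "pos b" and p: "pos (prodW (rev ws) b)"
  shows "ell D (prodW ws) < ell D (refl b \<circ> prodW ws)"
proof -
  have bR: "b \<in> R" using b pos_R by auto
  have b0: "b \<noteq> 0" using bR nzR by auto
  let ?v = "refl b \<circ> prodW ws"
  have vW: "?v \<in> weyl R" using weyl_leftR[OF word_weyl[OF ws] bR] .
  obtain rw where rw: "wd rw" "length rw = ell D ?v" "prodW rw = ?v" using ell_red[OF vW] by blast
  obtain pb where pb: "wd pb" "refl b = prodW pb" using refl_word[OF bR] by blast
  have "prodW rw = prodW (pb @ ws)" using rw pb by (simp add: prodW_append)
  then have "prodW (rev rw) x = prodW (rev (pb @ ws)) x" for x
    using rw pb ws by (intro rev_cong) auto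
  then have "prodW (rev rw) b = prodW (rev ws) (prodW (rev pb) b)" by (simp add: prodW_append)
  also have "prodW (rev pb) b = prodW (rev pb) (prodW pb (refl b b))"
  proof -
    have "prodW pb (refl b b) = b" using pb b0 by (metis refl_refl)
    then show ?thesis by simp
  qed
  also have "\<dots> = - b" using pb refl_self[OF b0] by simp
  finally have "prodW (rev rw) b = - prodW (rev ws) b" using wd_neg[OF wd_rev[OF ws]] by simp
  then have "neg (prodW (rev rw) b)" using p by (simp add: neg_def)
  from exch[OF rw(1) b this] obtain i where i: "i < length rw"
    "refl b \<circ> prodW rw = prodW (take i rw @ drop (Suc i) rw)" by blast
  have "refl b \<circ> prodW rw = prodW ws" using rw b0 by (simp add: fun_eq_iff)
  then have "ell D (prodW ws) \<le> length rw - 1"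
    using ell_le[OF wd_del[OF rw(1), of i]] i by simp
  then show ?thesis using i rw by linarith
qed

lemma pos_rep: "a \<in> R \<Longrightarrow> \<exists>b. pos b \<and> refl a = refl b"
  using pos_or_neg refl_minus by (metis neg_def minus_minus)

lemma strong_exch:
  assumes ws: "wd ws" and a: "a \<in> R" and lt: "ell D (refl a \<circ> prodW ws) < ell D (prodW ws)"
  shows "\<exists>i<length ws. refl a \<circ> prodW ws = prodW (take i ws @ drop (Suc i) ws)"
proof -
  obtain b where b: "pos b" "refl a = refl b" using pos_rep[OF a] by blast
  have "prodW (rev ws) b \<in> R" using wd_R[OF wd_rev[OF ws] pos_R[OF b(1)]] .
  moreover have "\<not> pos (prodW (rev ws) b)" using crit_pos[OF ws b(1)] lt b(2) by fastforce
  ultimately have "neg (prodW (rev ws) b)" using pos_or_neg by blast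
  from exch[OF ws b(1) this] show ?thesis using b(2) by simp
qed

lemma ell_ne:
  assumes u: "u \<in> weyl R" and a: "a \<in> R"
  shows "ell D (refl a \<circ> u) \<noteq> ell D u"
proof -
  obtain b where b: "pos b" "refl a = refl b" using pos_rep[OF a] by blast
  obtain ws where ws: "wd ws" "length ws = ell D u" "prodW ws = u" using ell_red[OF u] by blast
  have "prodW (rev ws) b \<in> R" using wd_R[OF wd_rev[OF ws(1)] pos_R[OF b(1)]] .
  then consider "pos (prodW (rev ws) b)" | "neg (prodW (rev ws) b)" using pos_or_neg by blast
  then show ?thesis
  proof cases
    case 1 then show ?thesis using crit_pos[OF ws(1) b(1)] ws b(2) by auto
  next
    case 2
    from exch[OF ws(1) b(1) this] obtain i where i: "i < length ws"
      "refl b \<circ> prodW ws = prodW (take i ws @ drop (Suc i) ws)" by blast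
    have "ell D (refl b \<circ> prodW ws) \<le> length ws - 1"
      using ell_le[OF wd_del[OF ws(1), of i]] i by simp
    then show ?thesis using ws b i by auto
  qed
qed

section \<open>Bruhat order\<close>

definition bstep :: "('v \<Rightarrow> 'v) \<Rightarrow> ('v \<Rightarrow> 'v) \<Rightarrow> bool" where
  "bstep u v \<longleftrightarrow> (\<exists>a\<in>R. v = refl a \<circ> u \<and> ell D u < ell D v)"

lemma bruhat_iff: "bruhat R D x w \<longleftrightarrow> x \<in> weyl R \<and> bstep\<^sup>*\<^sup>* x w"
  unfolding bruhat_def bstep_def by simp

lemma bstep_weyl: "bstep\<^sup>*\<^sup>* x w \<Longrightarrow> x \<in> weyl R \<Longrightarrow> w \<in> weyl R"
  by (induction rule: rtranclp_induct) (auto simp: bstep_def intro: weyl_leftR)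

lemma bstep_ell: "bstep\<^sup>*\<^sup>* x w \<Longrightarrow> ell D x \<le> ell D w \<and> (x \<noteq> w \<longrightarrow> ell D x < ell D w)"
  by (induction rule: rtranclp_induct) (auto simp: bstep_def)

lemma br_weyl: "bruhat R D x w \<Longrightarrow> x \<in> weyl R \<and> w \<in> weyl R"
  using bstep_weyl bruhat_iff by blast

lemma br_ell: "bruhat R D x w \<Longrightarrow> ell D x \<le> ell D w"
  using bstep_ell bruhat_iff by blast

lemma br_ell_lt: "bruhat R D x w \<Longrightarrow> x \<noteq> w \<Longrightarrow> ell D x < ell D w"
  using bstep_ell bruhat_iff by blast

lemma br_refl: "x \<in> weyl R \<Longrightarrow> bruhat R D x x"
  by (simp add: bruhat_iff)

lemma br_trans: "bruhat R D x y \<Longrightarrow> bruhat R D y z \<Longrightarrow> bruhat R D x z"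
  unfolding bruhat_iff by auto

lemma br_step: "x \<in> weyl R \<Longrightarrow> a \<in> R \<Longrightarrow> ell D x < ell D (refl a \<circ> x) \<Longrightarrow> bruhat R D x (refl a \<circ> x)"
  unfolding bruhat_iff bstep_def by auto

lemma br_left_up: "u \<in> weyl R \<Longrightarrow> d \<in> D \<Longrightarrow> ell D u < ell D (refl d \<circ> u) \<Longrightarrow> bruhat R D u (refl d \<circ> u)"
  using br_step DR by blast

lemma br_left_down: "u \<in> weyl R \<Longrightarrow> d \<in> D \<Longrightarrow> ell D (refl d \<circ> u) < ell D u \<Longrightarrow> bruhat R D (refl d \<circ> u) u"
  using br_left_up[of "refl d \<circ> u" d] weyl_left left_invol by metis

lemma right_as_left:
  assumes u: "u \<in> weyl R" and d: "d \<in> D"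
  shows "\<exists>a\<in>R. u \<circ> refl d = refl a \<circ> u"
proof -
  obtain ws where ws: "wd ws" "prodW ws = u" using weyl_word[OF u] by blast
  have "refl (prodW ws d) \<circ> prodW ws = prodW ws \<circ> refl d"
    using wd_conj[OF ws(1), of d] ws(1) by (simp add: fun_eq_iff)
  then have "refl (prodW ws d) \<circ> u = u \<circ> refl d" using ws(2) by simp
  moreover have "prodW ws d \<in> R" using wd_R[OF ws(1)] d DR by auto
  ultimately show ?thesis by metis
qed

lemma br_right_up: "u \<in> weyl R \<Longrightarrow> d \<in> D \<Longrightarrow> ell D u < ell D (u \<circ> refl d) \<Longrightarrow> bruhat R D u (u \<circ> refl d)"
  using right_as_left br_step by metis

lemma br_right_down: "u \<in> weyl R \<Longrightarrow> d \<in> D \<Longrightarrow> ell D (u \<circ> refl d) < ell D u \<Longrightarrow> bruhat R D (u \<circ> refl d) u"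
  using br_right_up[of "u \<circ> refl d" d] weyl_right right_invol by metis

lemma ell_right_ne: "u \<in> weyl R \<Longrightarrow> d \<in> D \<Longrightarrow> ell D (u \<circ> refl d) \<noteq> ell D u"
  using right_as_left ell_ne by metis

lemma ell_left_ne: "u \<in> weyl R \<Longrightarrow> d \<in> D \<Longrightarrow> ell D (refl d \<circ> u) \<noteq> ell D u"
  using ell_ne DR by blast

lemma diamond_left:
  assumes u: "u \<in> weyl R" and a: "a \<in> R" and v: "v = refl a \<circ> u" and d: "d \<in> D"
    and h1: "ell D (refl d \<circ> v) < ell D v" and h2: "ell D u + 1 = ell D v" and h3: "ell D (refl d \<circ> u) = ell D v"
  shows "refl d \<circ> u = v"
proof -
  have a0: "a \<noteq> 0" using nzR a by auto
  have vW: "v \<in> weyl R" using v weyl_leftR u a by simp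
  obtain rw where rw: "wd rw" "length rw = ell D (refl d \<circ> v)" "prodW rw = refl d \<circ> v"
    using ell_red weyl_left[OF vW d] by blast
  have lv: "length rw + 1 = ell D v" using rw h1 ell_left_ge[OF vW d] by linarith
  let ?ws = "refl d # rw"
  have ws: "wd ?ws" "prodW ?ws = v" using rw d left_invol by auto
  have "refl a \<circ> prodW ?ws = u" using ws v a0 by (simp add: fun_eq_iff)
  then have "ell D (refl a \<circ> prodW ?ws) < ell D (prodW ?ws)" using ws h2 by simp
  from strong_exch[OF ws(1) a this] obtain i where i: "i < length ?ws"
    "refl a \<circ> prodW ?ws = prodW (take i ?ws @ drop (Suc i) ?ws)" by blast
  have uu: "u = prodW (take i ?ws @ drop (Suc i) ?ws)" using i \<open>refl a \<circ> prodW ?ws = u\<close> by simp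
  show ?thesis
  proof (cases i)
    case 0
    then have "u = refl d \<circ> v" using uu rw by simp
    then show ?thesis using left_invol[OF d] by simp
  next
    case (Suc j)
    then have "u = refl d \<circ> prodW (take j rw @ drop (Suc j) rw)" using uu by simp
    then have "refl d \<circ> u = prodW (take j rw @ drop (Suc j) rw)" using left_invol[OF d] by simp
    then have "ell D (refl d \<circ> u) \<le> length rw - 1" using ell_le[OF wd_del[OF rw(1), of j]] i Suc by simp
    then show ?thesis using h3 lv by linarith
  qed
qed

lemma diamond_right:
  assumes u: "u \<in> weyl R" and a: "a \<in> R" and v: "v = refl a \<circ> u" and d: "d \<in> D"
    and h1: "ell D (v \<circ> refl d) < ell D v" and h2: "ell D u + 1 = ell D v" and h3: "ell D (u \<circ> refl d) = ell D v"
  shows "u \<circ> refl d = v"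
proof -
  have a0: "a \<noteq> 0" using nzR a by auto
  have vW: "v \<in> weyl R" using v weyl_leftR u a by simp
  obtain rw where rw: "wd rw" "length rw = ell D (v \<circ> refl d)" "prodW rw = v \<circ> refl d"
    using ell_red weyl_right[OF vW d] by blast
  have lv: "length rw + 1 = ell D v" using rw h1 ell_right_ge[OF vW d] by linarith
  let ?ws = "rw @ [refl d]"
  have ws: "wd ?ws" "prodW ?ws = v" using rw d right_invol by (auto simp: prodW_append)
  have "refl a \<circ> prodW ?ws = u" using ws v a0 by (simp add: fun_eq_iff)
  then have "ell D (refl a \<circ> prodW ?ws) < ell D (prodW ?ws)" using ws h2 by simp
  from strong_exch[OF ws(1) a this] obtain i where i: "i < length ?ws"
    "refl a \<circ> prodW ?ws = prodW (take i ?ws @ drop (Suc i) ?ws)" by blast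
  have uu: "u = prodW (take i ?ws @ drop (Suc i) ?ws)" using i \<open>refl a \<circ> prodW ?ws = u\<close> by simp
  show ?thesis
  proof (cases "i = length rw")
    case True
    then have "u = v \<circ> refl d" using uu rw by simp
    then show ?thesis using right_invol[OF d] by simp
  next
    case False
    then have il: "i < length rw" using i by simp
    then have "take i ?ws @ drop (Suc i) ?ws = (take i rw @ drop (Suc i) rw) @ [refl d]" by simp
    then have "u = prodW (take i rw @ drop (Suc i) rw) \<circ> refl d" using uu by (simp add: prodW_append o_assoc)
    then have "u \<circ> refl d = prodW (take i rw @ drop (Suc i) rw)" using right_invol[OF d] by simp
    then have "ell D (u \<circ> refl d) \<le> length rw - 1" using ell_le[OF wd_del[OF rw(1), of i]] il by simp
    then show ?thesis using h3 lv by linarith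
  qed
qed

section \<open>Lifting\<close>

definition mnL :: "'v \<Rightarrow> ('v \<Rightarrow> 'v) \<Rightarrow> ('v \<Rightarrow> 'v)" where
  "mnL d u = (if ell D (refl d \<circ> u) < ell D u then refl d \<circ> u else u)"

definition mnR :: "'v \<Rightarrow> ('v \<Rightarrow> 'v) \<Rightarrow> ('v \<Rightarrow> 'v)" where
  "mnR d u = (if ell D (u \<circ> refl d) < ell D u then u \<circ> refl d else u)"

lemma mnL_le: "u \<in> weyl R \<Longrightarrow> d \<in> D \<Longrightarrow> bruhat R D (mnL d u) u"
  unfolding mnL_def using br_left_down br_refl by auto

lemma mnL_le_s: "u \<in> weyl R \<Longrightarrow> d \<in> D \<Longrightarrow> bruhat R D (mnL d u) (refl d \<circ> u)"
proof -
  assume u: "u \<in> weyl R" and d: "d \<in> D"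
  have "ell D (refl d \<circ> u) \<noteq> ell D u" using ell_left_ne[OF u d] .
  then show ?thesis unfolding mnL_def using br_left_up[OF u d] br_refl weyl_left[OF u d] by auto
qed

lemma mnR_le: "u \<in> weyl R \<Longrightarrow> d \<in> D \<Longrightarrow> bruhat R D (mnR d u) u"
  unfolding mnR_def using br_right_down br_refl by auto

lemma mnR_le_s: "u \<in> weyl R \<Longrightarrow> d \<in> D \<Longrightarrow> bruhat R D (mnR d u) (u \<circ> refl d)"
proof -
  assume u: "u \<in> weyl R" and d: "d \<in> D"
  have "ell D (u \<circ> refl d) \<noteq> ell D u" using ell_right_ne[OF u d] .
  then show ?thesis unfolding mnR_def using br_right_up[OF u d] br_refl weyl_right[OF u d] by auto
qed

lemma N_left_step:
  assumes u: "u \<in> weyl R" and st: "bstep u v" and d: "d \<in> D"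
  shows "bruhat R D (mnL d u) (mnL d v)"
proof -
  obtain a where a: "a \<in> R" "v = refl a \<circ> u" "ell D u < ell D v" using st by (auto simp: bstep_def)
  have d0: "d \<noteq> 0" using nzD d by auto
  have vW: "v \<in> weyl R" using a u weyl_leftR by simp
  have suW: "refl d \<circ> u \<in> weyl R" using weyl_left[OF u d] .
  have a': "refl d a \<in> R" using reflR a(1) d DR by auto
  have sv: "refl d \<circ> v = refl (refl d a) \<circ> (refl d \<circ> u)"
    using a(2) refl_conj[OF d0, of a] d0 by (simp add: fun_eq_iff)
  have ne: "ell D (refl d \<circ> v) \<noteq> ell D (refl d \<circ> u)" using ell_ne[OF suW a'] sv by simp
  have uv: "bruhat R D u v" using br_step[OF u a(1)] a by simp
  show ?thesis
  proof (cases "ell D (refl d \<circ> u) < ell D (refl d \<circ> v)")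
    case True
    then have ss: "bruhat R D (refl d \<circ> u) (refl d \<circ> v)" using br_step[OF suW a'] sv by simp
    show ?thesis
    proof (cases "mnL d v = v")
      case True then show ?thesis using mnL_le[OF u d] uv br_trans by metis
    next
      case False
      then have "mnL d v = refl d \<circ> v" by (simp add: mnL_def split: if_splits)
      then show ?thesis using mnL_le_s[OF u d] ss br_trans by metis
    qed
  next
    case False
    then have gt: "ell D (refl d \<circ> v) < ell D (refl d \<circ> u)" using ne by linarith
    have e1: "ell D (refl d \<circ> u) \<le> ell D u + 1" using ell_left_le[OF u d] .
    have e2: "ell D v \<le> ell D (refl d \<circ> v) + 1" using ell_left_ge[OF vW d] .
    have h1: "ell D (refl d \<circ> v) < ell D v" using gt e1 e2 a(3) by linarith
    have h2: "ell D u + 1 = ell D v" using gt e1 e2 a(3) by linarith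
    have h3: "ell D (refl d \<circ> u) = ell D v" using gt e1 e2 a(3) by linarith
    have eq: "refl d \<circ> u = v" using diamond_left[OF u a(1) a(2) d h1 h2 h3] .
    then have "refl d \<circ> v = u" using left_invol[OF d] by metis
    moreover have "mnL d u = u" using h3 a(3) by (simp add: mnL_def)
    moreover have "mnL d v = refl d \<circ> v" using h1 by (simp add: mnL_def)
    ultimately show ?thesis using br_refl[OF u] by simp
  qed
qed

lemma N_right_step:
  assumes u: "u \<in> weyl R" and st: "bstep u v" and d: "d \<in> D"
  shows "bruhat R D (mnR d u) (mnR d v)"
proof -
  obtain a where a: "a \<in> R" "v = refl a \<circ> u" "ell D u < ell D v" using st by (auto simp: bstep_def)
  have vW: "v \<in> weyl R" using a u weyl_leftR by simp
  have suW: "u \<circ> refl d \<in> weyl R" using weyl_right[OF u d] .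
  have sv: "v \<circ> refl d = refl a \<circ> (u \<circ> refl d)" using a(2) by (simp add: o_assoc)
  have ne: "ell D (v \<circ> refl d) \<noteq> ell D (u \<circ> refl d)" using ell_ne[OF suW a(1)] sv by simp
  have uv: "bruhat R D u v" using br_step[OF u a(1)] a by simp
  show ?thesis
  proof (cases "ell D (u \<circ> refl d) < ell D (v \<circ> refl d)")
    case True
    then have ss: "bruhat R D (u \<circ> refl d) (v \<circ> refl d)" using br_step[OF suW a(1)] sv by simp
    show ?thesis
    proof (cases "mnR d v = v")
      case True then show ?thesis using mnR_le[OF u d] uv br_trans by metis
    next
      case False
      then have "mnR d v = v \<circ> refl d" by (simp add: mnR_def split: if_splits)
      then show ?thesis using mnR_le_s[OF u d] ss br_trans by metis
    qed
  next
    case False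
    then have gt: "ell D (v \<circ> refl d) < ell D (u \<circ> refl d)" using ne by linarith
    have e1: "ell D (u \<circ> refl d) \<le> ell D u + 1" using ell_right_le[OF u d] .
    have e2: "ell D v \<le> ell D (v \<circ> refl d) + 1" using ell_right_ge[OF vW d] .
    have h1: "ell D (v \<circ> refl d) < ell D v" using gt e1 e2 a(3) by linarith
    have h2: "ell D u + 1 = ell D v" using gt e1 e2 a(3) by linarith
    have h3: "ell D (u \<circ> refl d) = ell D v" using gt e1 e2 a(3) by linarith
    have eq: "u \<circ> refl d = v" using diamond_right[OF u a(1) a(2) d h1 h2 h3] .
    then have "v \<circ> refl d = u" using right_invol[OF d] by metis
    moreover have "mnR d u = u" using h3 a(3) by (simp add: mnR_def)
    moreover have "mnR d v = v \<circ> refl d" using h1 by (simp add: mnR_def)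
    ultimately show ?thesis using br_refl[OF u] by simp
  qed
qed

lemma mnL_weyl: "u \<in> weyl R \<Longrightarrow> d \<in> D \<Longrightarrow> mnL d u \<in> weyl R"
  using mnL_le br_weyl by blast
lemma mnR_weyl: "u \<in> weyl R \<Longrightarrow> d \<in> D \<Longrightarrow> mnR d u \<in> weyl R"
  using mnR_le br_weyl by blast

lemma N_left: "bruhat R D x y \<Longrightarrow> d \<in> D \<Longrightarrow> bruhat R D (mnL d x) (mnL d y)"
proof -
  assume b: "bruhat R D x y" and d: "d \<in> D"
  then have x: "x \<in> weyl R" and st: "bstep\<^sup>*\<^sup>* x y" by (auto simp: bruhat_iff)
  from st show ?thesis
  proof (induction rule: rtranclp_induct)
    case base then show ?case using br_refl mnL_weyl[OF x d] by blast
  next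
    case (step y z)
    have "y \<in> weyl R" using bstep_weyl[OF step(1) x] .
    then show ?case using step N_left_step[OF _ step(2) d] br_trans by blast
  qed
qed

lemma N_right: "bruhat R D x y \<Longrightarrow> d \<in> D \<Longrightarrow> bruhat R D (mnR d x) (mnR d y)"
proof -
  assume b: "bruhat R D x y" and d: "d \<in> D"
  then have x: "x \<in> weyl R" and st: "bstep\<^sup>*\<^sup>* x y" by (auto simp: bruhat_iff)
  from st show ?thesis
  proof (induction rule: rtranclp_induct)
    case base then show ?case using br_refl mnR_weyl[OF x d] by blast
  next
    case (step y z)
    have "y \<in> weyl R" using bstep_weyl[OF step(1) x] .
    then show ?case using step N_right_step[OF _ step(2) d] br_trans by blast
  qed
qed

lemma L1: "bruhat R D x w \<Longrightarrow> d \<in> D \<Longrightarrow> ell D (refl d \<circ> w) < ell D w \<Longrightarrow> ell D x < ell D (refl d \<circ> x)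
   \<Longrightarrow> bruhat R D x (refl d \<circ> w)"
  using N_left[of x w d] by (simp add: mnL_def)

lemma L2: "bruhat R D x w \<Longrightarrow> d \<in> D \<Longrightarrow> ell D (refl d \<circ> x) < ell D x
   \<Longrightarrow> bruhat R D (refl d \<circ> x) (refl d \<circ> w)"
proof -
  assume b: "bruhat R D x w" and d: "d \<in> D" and lt: "ell D (refl d \<circ> x) < ell D x"
  have "bruhat R D (mnL d x) (mnL d w)" using N_left[OF b d] .
  moreover have "bruhat R D (mnL d w) (refl d \<circ> w)" using mnL_le_s br_weyl b d by blast
  ultimately show ?thesis using lt by (simp add: mnL_def br_trans)
qed

lemma L_iff: "x \<in> weyl R \<Longrightarrow> u \<in> weyl R \<Longrightarrow> d \<in> D \<Longrightarrow> ell D x < ell D (refl d \<circ> x)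
   \<Longrightarrow> bruhat R D x u \<longleftrightarrow> bruhat R D x (refl d \<circ> u)"
proof -
  assume x: "x \<in> weyl R" and u: "u \<in> weyl R" and d: "d \<in> D" and lt: "ell D x < ell D (refl d \<circ> x)"
  have ne: "ell D (refl d \<circ> u) \<noteq> ell D u" using ell_left_ne[OF u d] .
  show ?thesis
  proof (cases "ell D (refl d \<circ> u) < ell D u")
    case True
    then show ?thesis using L1[OF _ d True lt] br_left_down[OF u d True] br_trans by blast
  next
    case False
    then have gt: "ell D u < ell D (refl d \<circ> u)" using ne by linarith
    have su: "refl d \<circ> u \<in> weyl R" using weyl_left[OF u d] .
    have "ell D (refl d \<circ> (refl d \<circ> u)) < ell D (refl d \<circ> u)" using gt by (simp only: left_invol[OF d])
    from L1[OF _ d this lt] have "bruhat R D x (refl d \<circ> u) \<Longrightarrow> bruhat R D x u"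
      by (simp only: left_invol[OF d])
    then show ?thesis using br_left_up[OF u d gt] br_trans by blast
  qed
qed

section \<open>Chain property\<close>

definition mxL :: "'v \<Rightarrow> ('v \<Rightarrow> 'v) \<Rightarrow> ('v \<Rightarrow> 'v)" where
  "mxL d u = (if ell D u < ell D (refl d \<circ> u) then refl d \<circ> u else u)"

lemma mxL_ge: "u \<in> weyl R \<Longrightarrow> d \<in> D \<Longrightarrow> bruhat R D u (mxL d u)"
  unfolding mxL_def using br_left_up br_refl by auto

lemma mxL_ge_s: "u \<in> weyl R \<Longrightarrow> d \<in> D \<Longrightarrow> bruhat R D (refl d \<circ> u) (mxL d u)"
proof -
  assume u: "u \<in> weyl R" and d: "d \<in> D"
  have "ell D (refl d \<circ> u) \<noteq> ell D u" using ell_left_ne[OF u d] .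
  then show ?thesis unfolding mxL_def using br_left_down[OF u d] br_refl weyl_left[OF u d] by auto
qed

lemma mxL_weyl: "u \<in> weyl R \<Longrightarrow> d \<in> D \<Longrightarrow> mxL d u \<in> weyl R"
  using mxL_ge br_weyl by blast

lemma M_left_step:
  assumes u: "u \<in> weyl R" and st: "bstep u v" and d: "d \<in> D"
  shows "bruhat R D (mxL d u) (mxL d v)"
proof -
  obtain a where a: "a \<in> R" "v = refl a \<circ> u" "ell D u < ell D v" using st by (auto simp: bstep_def)
  have d0: "d \<noteq> 0" using nzD d by auto
  have vW: "v \<in> weyl R" using a u weyl_leftR by simp
  have suW: "refl d \<circ> u \<in> weyl R" using weyl_left[OF u d] .
  have a': "refl d a \<in> R" using reflR a(1) d DR by auto
  have sv: "refl d \<circ> v = refl (refl d a) \<circ> (refl d \<circ> u)"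
    using a(2) refl_conj[OF d0, of a] d0 by (simp add: fun_eq_iff)
  have ne: "ell D (refl d \<circ> v) \<noteq> ell D (refl d \<circ> u)" using ell_ne[OF suW a'] sv by simp
  have uv: "bruhat R D u v" using br_step[OF u a(1)] a by simp
  show ?thesis
  proof (cases "ell D (refl d \<circ> u) < ell D (refl d \<circ> v)")
    case True
    then have ss: "bruhat R D (refl d \<circ> u) (refl d \<circ> v)" using br_step[OF suW a'] sv by simp
    show ?thesis
    proof (cases "mxL d u = u")
      case True then show ?thesis using mxL_ge[OF vW d] uv br_trans by metis
    next
      case False
      then have "mxL d u = refl d \<circ> u" by (simp add: mxL_def split: if_splits)
      then show ?thesis using mxL_ge_s[OF vW d] ss br_trans by metis
    qed
  next
    case False
    then have gt: "ell D (refl d \<circ> v) < ell D (refl d \<circ> u)" using ne by linarith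
    have e1: "ell D (refl d \<circ> u) \<le> ell D u + 1" using ell_left_le[OF u d] .
    have e2: "ell D v \<le> ell D (refl d \<circ> v) + 1" using ell_left_ge[OF vW d] .
    have h1: "ell D (refl d \<circ> v) < ell D v" using gt e1 e2 a(3) by linarith
    have h2: "ell D u + 1 = ell D v" using gt e1 e2 a(3) by linarith
    have h3: "ell D (refl d \<circ> u) = ell D v" using gt e1 e2 a(3) by linarith
    have eq: "refl d \<circ> u = v" using diamond_left[OF u a(1) a(2) d h1 h2 h3] .
    moreover have "mxL d u = refl d \<circ> u" using h3 a(3) by (simp add: mxL_def)
    moreover have "mxL d v = v" using h1 by (simp add: mxL_def)
    ultimately show ?thesis using br_refl[OF vW] by simp
  qed
qed

lemma M_left: "bruhat R D x y \<Longrightarrow> d \<in> D \<Longrightarrow> bruhat R D (mxL d x) (mxL d y)"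
proof -
  assume b: "bruhat R D x y" and d: "d \<in> D"
  then have x: "x \<in> weyl R" and st: "bstep\<^sup>*\<^sup>* x y" by (auto simp: bruhat_iff)
  from st show ?thesis
  proof (induction rule: rtranclp_induct)
    case base then show ?case using br_refl mxL_weyl[OF x d] by blast
  next
    case (step y z)
    have "y \<in> weyl R" using bstep_weyl[OF step(1) x] .
    then show ?case using step M_left_step[OF _ step(2) d] br_trans by blast
  qed
qed

lemma left_descent:
  assumes v: "v \<in> weyl R" and pos: "ell D v > 0"
  shows "\<exists>d\<in>D. ell D (refl d \<circ> v) < ell D v"
proof -
  obtain ws where ws: "wd ws" "length ws = ell D v" "prodW ws = v" using ell_red[OF v] by blast
  then obtain s rs where srs: "ws = s # rs" using pos by (cases ws) auto
  then obtain d where d: "d \<in> D" "s = refl d" using ws by auto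
  have "refl d \<circ> v = prodW rs" using ws srs d left_invol by (metis prodW_Cons)
  then have "ell D (refl d \<circ> v) \<le> length rs" using ell_le ws srs by simp
  moreover have "length rs < ell D v" using ws(2) srs by simp
  ultimately show ?thesis using d(1) by (meson le_less_trans)
qed

lemma chain_prop:
  "bruhat R D u v \<Longrightarrow> ell D u + 2 \<le> ell D v \<Longrightarrow>
    \<exists>z. bruhat R D u z \<and> bruhat R D z v \<and> ell D u < ell D z \<and> ell D z < ell D v"
proof (induction "ell D v" arbitrary: u v rule: less_induct)
  case less
  have uW: "u \<in> weyl R" and vW: "v \<in> weyl R" using br_weyl less.prems(1) by auto
  obtain d where d: "d \<in> D" "ell D (refl d \<circ> v) < ell D v"
    using left_descent[OF vW] less.prems(2) by auto
  have svW: "refl d \<circ> v \<in> weyl R" using weyl_left[OF vW d(1)] .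
  have sv1: "ell D (refl d \<circ> v) + 1 = ell D v" using d ell_left_ge[OF vW d(1)] by linarith
  have svv: "bruhat R D (refl d \<circ> v) v" using br_left_down[OF vW d(1) d(2)] .
  have neu: "ell D (refl d \<circ> u) \<noteq> ell D u" using ell_left_ne[OF uW d(1)] .
  show ?case
  proof (cases "ell D u < ell D (refl d \<circ> u)")
    case True
    have "bruhat R D u (refl d \<circ> v)" using L1[OF less.prems(1) d(1) d(2) True] .
    then show ?thesis using svv sv1 less.prems(2) by (intro exI[of _ "refl d \<circ> v"]) auto
  next
    case False
    then have su: "ell D (refl d \<circ> u) < ell D u" using neu by linarith
    have su1: "ell D (refl d \<circ> u) + 1 = ell D u" using su ell_left_ge[OF uW d(1)] by linarith
    have b2: "bruhat R D (refl d \<circ> u) (refl d \<circ> v)" using L2[OF less.prems(1) d(1) su] .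
    have "ell D (refl d \<circ> u) + 2 \<le> ell D (refl d \<circ> v)" using su1 sv1 less.prems(2) by linarith
    from less.hyps[OF d(2) b2 this] obtain z' where z': "bruhat R D (refl d \<circ> u) z'" "bruhat R D z' (refl d \<circ> v)"
      "ell D (refl d \<circ> u) < ell D z'" "ell D z' < ell D (refl d \<circ> v)" by blast
    have z'W: "z' \<in> weyl R" using br_weyl z'(1) by auto
    have mu: "mxL d (refl d \<circ> u) = u" using su by (simp add: mxL_def left_invol[OF d(1)])
    have mv: "mxL d (refl d \<circ> v) = v" using d(2) by (simp add: mxL_def left_invol[OF d(1)])
    have A: "bruhat R D u (mxL d z')" using M_left[OF z'(1) d(1)] mu by simp
    have B: "bruhat R D (mxL d z') v" using M_left[OF z'(2) d(1)] mv by simp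
    have nez: "ell D (refl d \<circ> z') \<noteq> ell D z'" using ell_left_ne[OF z'W d(1)] .
    show ?thesis
    proof (cases "ell D z' < ell D (refl d \<circ> z')")
      case True
      then have "mxL d z' = refl d \<circ> z'" by (simp add: mxL_def)
      moreover have "ell D (refl d \<circ> z') \<le> ell D z' + 1" using ell_left_le[OF z'W d(1)] .
      ultimately show ?thesis using A B True z' su1 sv1 by (intro exI[of _ "mxL d z'"]) auto
    next
      case False
      then have mz: "mxL d z' = z'" by (simp add: mxL_def)
      show ?thesis
      proof (cases "ell D u < ell D z'")
        case True
        then show ?thesis using A B mz z' sv1 by (intro exI[of _ z']) auto
      next
        case False
        then have "z' = u" using A mz br_ell_lt by fastforce
        then have "bruhat R D u (refl d \<circ> v)" using z'(2) by simp
        then show ?thesis using svv sv1 less.prems(2) by (intro exI[of _ "refl d \<circ> v"]) auto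
      qed
    qed
  qed
qed

lemma cover_ell:
  assumes c: "bcover R D u v" shows "ell D v = ell D u + 1"
proof -
  have b: "bruhat R D u v" and ne: "u \<noteq> v" and m: "\<forall>z. bruhat R D u z \<and> bruhat R D z v \<longrightarrow> z = u \<or> z = v"
    using c by (auto simp: bcover_def)
  have lt: "ell D u < ell D v" using br_ell_lt[OF b ne] .
  show ?thesis
  proof (rule ccontr)
    assume "ell D v \<noteq> ell D u + 1"
    then have "ell D u + 2 \<le> ell D v" using lt by linarith
    from chain_prop[OF b this] obtain z where z: "bruhat R D u z" "bruhat R D z v"
      "ell D u < ell D z" "ell D z < ell D v" by blast
    then show False using m by fastforce
  qed
qed

lemma del_pos_Nil [simp]: "del_pos P [] = []"
  by (simp add: del_pos_def)

lemma del_pos_Cons: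
  "del_pos P (s # ws) = (if 1 \<in> P then del_pos {i. Suc i \<in> P} ws else s # del_pos {i. Suc i \<in> P} ws)"
proof -
  have u0: "[1..<Suc (Suc (length ws))] = 1 # [Suc 1..<Suc (Suc (length ws))]"
    by (rule upt_conv_Cons) simp
  have u: "[1..<Suc (length (s # ws))] = 1 # map Suc [1..<Suc (length ws)]"
    unfolding map_Suc_upt using u0 by simp
  have f: "filter (\<lambda>(i, s). i \<notin> P) (zip (map Suc xs) ws) = map (\<lambda>(i,s). (Suc i, s)) (filter (\<lambda>(i, s). i \<notin> {i. Suc i \<in> P}) (zip xs ws))" for xs :: "nat list"
    by (induction xs arbitrary: ws) (auto simp: zip_Cons1 split: list.splits)
  show ?thesis unfolding del_pos_def u
    by (simp add: f del: upt_Suc)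
qed

lemma del_pos_snoc:
  "del_pos P (xs @ [s]) = del_pos P xs @ (if Suc (length xs) \<in> P then [] else [s])"
proof -
  have u: "[1..<Suc (length (xs @ [s]))] = [1..<Suc (length xs)] @ [Suc (length xs)]" by simp
  show ?thesis unfolding del_pos_def u by (subst zip_append) (auto simp: Suc_le_eq)
qed

lemma del_pos_empty [simp]: "del_pos {} ws = ws"
  by (induction ws) (simp_all add: del_pos_Cons)

lemma del_pos_len: "length (del_pos P ws) = card ({1..length ws} - P)"
proof (induction ws rule: rev_induct)
  case Nil then show ?case by simp
next
  case (snoc s xs)
  have e: "{1..length (xs @ [s])} - P = ({1..length xs} - P) \<union> ({Suc (length xs)} - P)"
    by auto
  have "card (({1..length xs} - P) \<union> ({Suc (length xs)} - P)) = card ({1..length xs} - P) + card ({Suc (length xs)} - P)"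
    by (rule card_Un_disjoint) auto
  moreover have "card ({Suc (length xs)} - P) = (if Suc (length xs) \<in> P then 0 else 1)" by (simp add: insert_Diff_if)
  moreover have "length (del_pos P (xs @ [s])) = card ({1..length xs} - P) + card ({Suc (length xs)} - P)"
    using snoc calculation(2) by (simp add: del_pos_snoc)
  ultimately show ?case using e by simp
qed

lemma del_pos_cong:
  assumes "P \<inter> {1..length ws} = Q \<inter> {1..length ws}"
  shows "del_pos P ws = del_pos Q ws"
proof -
  have "(\<lambda>(i, s). i \<notin> P) p = (\<lambda>(i, s). i \<notin> Q) p" if p: "p \<in> set (zip [1..<Suc (length ws)] ws)" for p
  proof -
    obtain i s where ps: "p = (i, s)" by (cases p)
    then have "i \<in> set [1..<Suc (length ws)]" using p by (blast dest: set_zip_leftD)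
    then have "i \<in> {1..length ws}" by (auto simp del: upt_Suc)
    then have "(i \<notin> P) = (i \<notin> Q)" using assms by blast
    then show ?thesis using ps by simp
  qed
  then have "filter (\<lambda>(i, s). i \<notin> P) (zip [1..<Suc (length ws)] ws) = filter (\<lambda>(i, s). i \<notin> Q) (zip [1..<Suc (length ws)] ws)"
    by (rule filter_cong[OF refl])
  then show ?thesis unfolding del_pos_def by simp
qed

lemma del_pos_single_Cons: "1 < i \<Longrightarrow> del_pos {i} (s # ws) = s # del_pos {i - 1} ws"
proof -
  assume "1 < i"
  then have "{j. Suc j \<in> {i}} = {i - 1}" by (auto simp: set_eq_iff)
  then show ?thesis using \<open>1 < i\<close> by (simp add: del_pos_Cons)
qed

lemma del_pos_one_Cons: "del_pos {1} (s # ws) = ws"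
proof -
  have "del_pos {1} (s # ws) = del_pos {0} ws" by (simp add: del_pos_Cons)
  also have "\<dots> = del_pos {} ws" by (rule del_pos_cong) auto
  finally show ?thesis by simp
qed

lemma sorted_le_last: "sorted_wrt (<) L \<Longrightarrow> y \<in> set L \<Longrightarrow> y \<le> (last L :: nat)"
proof (induction L)
  case Nil then show ?case by simp
next
  case (Cons a L)
  show ?case
  proof (cases L)
    case Nil then show ?thesis using Cons by simp
  next
    case (Cons b L')
    then have ne: "L \<noteq> []" by simp
    have l: "last (a # L) = last L" using ne by simp
    have "last L \<in> set L" using ne by simp
    then have al: "a < last L" using Cons.prems(1) by simp
    show ?thesis using Cons.prems Cons.IH al l by auto
  qed
qed

lemma sorted_hd_le: "sorted_wrt (<) L \<Longrightarrow> y \<in> set L \<Longrightarrow> hd L \<le> (y :: nat)"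
  by (cases L) auto

lemma card_take_set: "distinct L \<Longrightarrow> card (set (take k L)) = min k (length L)"
  by (simp add: distinct_card)

lemma del_single_len: "1 \<le> i \<Longrightarrow> i \<le> length ws \<Longrightarrow> length (del_pos {i} ws) = length ws - 1"
  by (simp add: del_pos_len card_Diff_singleton)

lemma wd_del_pos: "wd ws \<Longrightarrow> wd (del_pos P ws)"
  unfolding del_pos_def by (auto dest: set_zip_rightD)

lemma reduced_tl: "wd (s # ws) \<Longrightarrow> ell D (prodW (s # ws)) = Suc (length ws) \<Longrightarrow> ell D (prodW ws) = length ws"
proof -
  assume w: "wd (s # ws)" and e: "ell D (prodW (s # ws)) = Suc (length ws)"
  obtain d where d: "d \<in> D" "s = refl d" using w by auto
  have ws: "wd ws" using w by simp
  have "ell D (refl d \<circ> prodW ws) \<le> ell D (prodW ws) + 1" using ell_left_le[OF word_weyl[OF ws] d(1)] .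
  then show ?thesis using e d ell_le[OF ws] by simp
qed

lemma distinct_del:
  "wd ws \<Longrightarrow> ell D (prodW ws) = length ws \<Longrightarrow> 1 \<le> i \<Longrightarrow> i < j \<Longrightarrow> j \<le> length ws \<Longrightarrow>
    prodW (del_pos {i} ws) \<noteq> prodW (del_pos {j} ws)"
proof (induction ws arbitrary: i j)
  case Nil then show ?case by simp
next
  case (Cons s ws)
  obtain d where d: "d \<in> D" "s = refl d" using Cons.prems(1) by auto
  have ws: "wd ws" using Cons.prems(1) by simp
  have j1: "1 < j" using Cons.prems by simp
  show ?case
  proof (cases "i = 1")
    case True
    show ?thesis
    proof
      assume eq: "prodW (del_pos {i} (s # ws)) = prodW (del_pos {j} (s # ws))"
      then have "prodW ws = s \<circ> prodW (del_pos {j - 1} ws)"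
        using True j1 del_pos_one_Cons[of s ws] by (simp add: del_pos_single_Cons)
      then have "prodW (s # ws) = prodW (del_pos {j - 1} ws)"
        using d left_invol by simp
      moreover have "ell D (prodW (del_pos {j - 1} ws)) \<le> length (del_pos {j - 1} ws)"
        using ell_le[OF wd_del_pos[OF ws]] .
      moreover have "length (del_pos {j - 1} ws) = length ws - 1"
        using del_single_len[of "j - 1" ws] Cons.prems j1 by simp
      ultimately have "ell D (prodW (s # ws)) \<le> length ws - 1" by simp
      then show False using Cons.prems(2) unfolding length_Cons by linarith
    qed
  next
    case False
    then have i1: "1 < i" using Cons.prems by simp
    have red: "ell D (prodW ws) = length ws" using reduced_tl[OF Cons.prems(1) Cons.prems(2)[unfolded length_Cons]] .
    have ih: "prodW (del_pos {i - 1} ws) \<noteq> prodW (del_pos {j - 1} ws)"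
      using Cons.IH[OF ws red] i1 Cons.prems by simp
    show ?thesis
    proof
      assume eq: "prodW (del_pos {i} (s # ws)) = prodW (del_pos {j} (s # ws))"
      then have "refl d \<circ> prodW (del_pos {i - 1} ws) = refl d \<circ> prodW (del_pos {j - 1} ws)"
        using i1 j1 d by (simp add: del_pos_single_Cons)
      then have "refl d \<circ> (refl d \<circ> prodW (del_pos {i - 1} ws)) = refl d \<circ> (refl d \<circ> prodW (del_pos {j - 1} ws))"
        by simp
      then show False using ih left_invol[OF d(1)] by metis
    qed
  qed
qed

lemma reduce_snoc:
  assumes xs: "wd xs" and d: "d \<in> D" and P: "P \<subseteq> {1..length xs}" and cP: "card P = k"
    and e: "ell D (prodW (del_pos P (xs @ [refl d]))) + k = Suc (length xs)"
  shows "ell D (prodW (del_pos P xs)) + k = length xs"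
proof -
  have fP: "finite P" using P finite_subset by blast
  have "del_pos P (xs @ [refl d]) = del_pos P xs @ [refl d]" using P by (auto simp: del_pos_snoc)
  then have eq: "prodW (del_pos P (xs @ [refl d])) = prodW (del_pos P xs) \<circ> refl d" by (simp add: prodW_append)
  have cW: "prodW (del_pos P xs) \<in> weyl R" using word_weyl[OF wd_del_pos[OF xs]] .
  have 1: "ell D (prodW (del_pos P xs) \<circ> refl d) \<le> ell D (prodW (del_pos P xs)) + 1"
    using ell_right_le[OF cW d] .
  have "ell D (prodW (del_pos P xs)) \<le> length (del_pos P xs)" using ell_le[OF wd_del_pos[OF xs]] .
  also have "length (del_pos P xs) = length xs - k" using P cP fP by (simp add: del_pos_len card_Diff_subset)
  finally have 2: "ell D (prodW (del_pos P xs)) \<le> length xs - k" .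
  have "k \<le> length xs" using P cP card_mono[of "{1..length xs}" P] by simp
  have e2: "ell D (prodW (del_pos P xs) \<circ> refl d) + k = Suc (length xs)" using e unfolding eq .
  then show ?thesis using 1 2 \<open>k \<le> length xs\<close> by linarith
qed

lemma S:
  assumes "wd ws" "sorted_wrt (<) L" "L \<noteq> []" "set L \<subseteq> {1..length ws}"
    "\<forall>k \<le> length L. ell D (prodW (del_pos (set (take k L)) ws)) + k = length ws"
    "1 \<le> i" "i < hd L"
  shows "\<not> bruhat R D (prodW (del_pos (set L) ws)) (prodW (del_pos {i} ws))"
  using assms
proof (induction ws arbitrary: L i rule: rev_induct)
  case Nil then show ?case by auto
next
  case (snoc s xs)
  note pr = snoc.prems
  obtain d where d: "d \<in> D" "s = refl d" using pr(1) by auto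
  have xs: "wd xs" using pr(1) by simp
  define m where "m = length xs"
  have dist: "distinct L" using pr(2) strict_sorted_iff by blast
  have cardk: "card (set (take k L)) = k" if "k \<le> length L" for k
    using card_take_set[OF dist, of k] that by simp
  have lws: "length (xs @ [s]) = Suc m" by (simp add: m_def)
  have hdin: "hd L \<in> set L" using pr(3) by simp
  have hdle: "hd L \<le> Suc m" using hdin pr(4) lws by auto
  have ilt: "i \<le> m" using pr(7) hdle by simp
  have e: "\<And>k. k \<le> length L \<Longrightarrow> ell D (prodW (del_pos (set (take k L)) (xs @ [s]))) + k = Suc m"
    using pr(5) lws by simp
  show ?case
  proof (cases "length L = 1")
    case True
    then obtain a where L: "L = [a]" by (cases L) (auto simp: length_Suc_conv)
    have ex: "ell D (prodW (del_pos {a} (xs @ [s]))) + 1 = Suc m" using e[of 1] L by simp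
    have red: "ell D (prodW (xs @ [s])) = Suc m" using e[of 0] by simp
    have ia: "i < a" using pr(7) L by simp
    have a: "a \<le> Suc m" using pr(4) L lws by simp
    show ?thesis
    proof
      assume b: "bruhat R D (prodW (del_pos (set L) (xs @ [s]))) (prodW (del_pos {i} (xs @ [s])))"
      have "ell D (prodW (del_pos {i} (xs @ [s]))) \<le> length (del_pos {i} (xs @ [s]))"
        using ell_le[OF wd_del_pos[OF pr(1)]] .
      also have "\<dots> = m" using del_single_len[of i "xs @ [s]"] pr(6) ilt lws by simp
      finally have le: "ell D (prodW (del_pos {i} (xs @ [s]))) \<le> m" .
      have "prodW (del_pos {a} (xs @ [s])) = prodW (del_pos {i} (xs @ [s]))"
      proof (rule ccontr)
        assume "\<not> ?thesis"
        then have "ell D (prodW (del_pos {a} (xs @ [s]))) < ell D (prodW (del_pos {i} (xs @ [s])))"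
          using br_ell_lt b L by simp
        then show False using le ex by linarith
      qed
      moreover have "prodW (del_pos {i} (xs @ [s])) \<noteq> prodW (del_pos {a} (xs @ [s]))"
        using distinct_del[OF pr(1) red[folded lws] pr(6) ia] a lws by simp
      ultimately show False by simp
    qed
  next
    case False
    then have L2: "length L \<ge> 2" using pr(3) by (cases L) (auto simp: Suc_le_eq)
    have lastin: "last L \<in> set L" using pr(3) by simp
    have sW: "\<And>u. u \<in> weyl R \<Longrightarrow> u \<circ> s \<circ> s = u" using d right_invol by simp
    show ?thesis
    proof (cases "last L \<le> m")
      case True
      have sub: "set L \<subseteq> {1..m}" using sorted_le_last[OF pr(2)] True pr(4) by fastforce
      have e': "\<forall>k \<le> length L. ell D (prodW (del_pos (set (take k L)) xs)) + k = length xs"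
      proof (intro allI impI)
        fix k assume k: "k \<le> length L"
        have "set (take k L) \<subseteq> {1..length xs}" using sub set_take_subset m_def by fastforce
        then show "ell D (prodW (del_pos (set (take k L)) xs)) + k = length xs"
          using reduce_snoc[OF xs d(1) _ cardk[OF k]] e[OF k] d m_def by simp
      qed
      have ih: "\<not> bruhat R D (prodW (del_pos (set L) xs)) (prodW (del_pos {i} xs))"
        using snoc.IH[OF xs pr(2) pr(3) _ e' pr(6) pr(7)] sub m_def by simp
      have xe: "prodW (del_pos (set L) (xs @ [s])) = prodW (del_pos (set L) xs) \<circ> s"
        using sub by (auto simp: del_pos_snoc prodW_append m_def)
      have ue: "prodW (del_pos {i} (xs @ [s])) = prodW (del_pos {i} xs) \<circ> s"
        using ilt by (auto simp: del_pos_snoc prodW_append m_def)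
      let ?x = "prodW (del_pos (set L) (xs @ [s]))"
      let ?x' = "prodW (del_pos (set L) xs)"
      have x'W: "?x' \<in> weyl R" using word_weyl[OF wd_del_pos[OF xs]] .
      have xs_eq: "?x \<circ> s = ?x'" using xe d right_invol by simp
      have ex: "ell D ?x + length L = Suc m" using e[of "length L"] by simp
      have ex': "ell D ?x' + length L = m" using e'[rule_format, of "length L"] m_def by simp
      have mx: "mnR d ?x = ?x'" using xs_eq ex ex' d by (simp add: mnR_def)
      show ?thesis
      proof
        assume b: "bruhat R D ?x (prodW (del_pos {i} (xs @ [s])))"
        have uW: "prodW (del_pos {i} (xs @ [s])) \<in> weyl R" using br_weyl b by blast
        have "bruhat R D ?x' (mnR d (prodW (del_pos {i} (xs @ [s]))))" using N_right[OF b d(1)] mx by simp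
        moreover have "bruhat R D (mnR d (prodW (del_pos {i} (xs @ [s])))) (prodW (del_pos {i} xs))"
        proof -
          have "prodW (del_pos {i} (xs @ [s])) \<circ> refl d = prodW (del_pos {i} xs)"
            unfolding ue unfolding d(2) by (rule right_invol[OF d(1)])
          note eq = this
          from mnR_le_s[OF uW d(1)] show ?thesis unfolding eq .
        qed
        ultimately show False using ih br_trans by blast
      qed
    next
      case False
      then have lastL: "last L = Suc m" using lastin pr(4) lws by fastforce
      define L' where "L' = butlast L"
      have LL: "L = L' @ [Suc m]" using pr(3) lastL unfolding L'_def by (metis append_butlast_last_id)
      have L'ne: "L' \<noteq> []" using L2 LL by auto
      have sL': "sorted_wrt (<) L'" using pr(2) LL sorted_wrt_append by blast
      have "sorted_wrt (<) (L' @ [Suc m])" using pr(2) LL by simp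
      then have lt: "\<forall>y\<in>set L'. y < Suc m" by (simp add: sorted_wrt_append)
      have sub: "set L' \<subseteq> {1..m}"
      proof
        fix y assume y: "y \<in> set L'"
        then have "y \<in> set L" using LL by simp
        then have "1 \<le> y" using pr(4) by auto
        then show "y \<in> {1..m}" using lt y by auto
      qed
      have hd': "hd L' = hd L" using LL L'ne by simp
      have e': "\<forall>k \<le> length L'. ell D (prodW (del_pos (set (take k L')) xs)) + k = length xs"
      proof (intro allI impI)
        fix k assume k: "k \<le> length L'"
        have tk: "take k L = take k L'" using LL k by simp
        have kL: "k \<le> length L" using LL k by simp
        have "set (take k L') \<subseteq> {1..length xs}" using sub set_take_subset m_def by fastforce
        then show "ell D (prodW (del_pos (set (take k L')) xs)) + k = length xs"
          using reduce_snoc[OF xs d(1) _ cardk[OF kL]] e[OF kL] d m_def tk by simp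
      qed
      have ih: "\<not> bruhat R D (prodW (del_pos (set L') xs)) (prodW (del_pos {i} xs))"
        using snoc.IH[OF xs sL' L'ne _ e' pr(6)] sub m_def pr(7) hd' by simp
      let ?x = "prodW (del_pos (set L) (xs @ [s]))"
      have "del_pos (set L) (xs @ [s]) = del_pos (set L) xs" using LL by (simp add: del_pos_snoc m_def)
      also have "\<dots> = del_pos (set L') xs" using LL by (intro del_pos_cong) (auto simp: m_def)
      finally have xe: "?x = prodW (del_pos (set L') xs)" by simp
      have "del_pos (set L') (xs @ [s]) = del_pos (set L') xs @ [s]" using lt by (auto simp: del_pos_snoc m_def)
      then have xse: "?x \<circ> s = prodW (del_pos (set (take (length L') L)) (xs @ [s]))"
        using xe LL by (simp add: prodW_append)
      have ex: "ell D ?x + length L = Suc m" using e[of "length L"] by simp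
      have ex2: "ell D (?x \<circ> s) + length L' = Suc m" using e[of "length L'"] xse LL by simp
      have mx: "mnR d ?x = ?x" using ex ex2 LL d by (simp add: mnR_def)
      show ?thesis
      proof
        assume b: "bruhat R D ?x (prodW (del_pos {i} (xs @ [s])))"
        have uW: "prodW (del_pos {i} (xs @ [s])) \<in> weyl R" using br_weyl b by blast
        have ue: "prodW (del_pos {i} (xs @ [s])) = prodW (del_pos {i} xs) \<circ> s"
          using ilt by (auto simp: del_pos_snoc prodW_append m_def)
        have "bruhat R D ?x (mnR d (prodW (del_pos {i} (xs @ [s]))))" using N_right[OF b d(1)] mx by simp
        moreover have "bruhat R D (mnR d (prodW (del_pos {i} (xs @ [s])))) (prodW (del_pos {i} xs))"
        proof -
          have "prodW (del_pos {i} (xs @ [s])) \<circ> refl d = prodW (del_pos {i} xs)"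
            unfolding ue unfolding d(2) by (rule right_invol[OF d(1)])
          note eq = this
          from mnR_le_s[OF uW d(1)] show ?thesis unfolding eq .
        qed
        ultimately show False using ih xe br_trans by metis
      qed
    qed
  qed
qed

lemma chain_ok:
  assumes rw: "reduced_word D ws w" and mc: "max_chain R D c w x" and cl: "chain_label ws c L"
  shows "\<forall>k \<le> length L. ell D (prodW (del_pos (set (take k L)) ws)) + k = length ws"
    and "ell D x + length L = length ws"
proof -
  have lc: "length c = length L + 1" and ck: "\<And>k. k < length c \<Longrightarrow> c ! k = prodW (del_pos (set (take k L)) ws)"
    using cl by (auto simp: chain_label_def)
  have c0: "c ! 0 = w" and cne: "c \<noteq> []" and lx: "last c = x"
    and cov: "\<And>k. Suc k < length c \<Longrightarrow> bcover R D (c ! Suc k) (c ! k)"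
    using mc by (auto simp: max_chain_def)
  have ew: "ell D w = length ws" using rw by (simp add: reduced_word_def)
  have A: "k \<le> length L \<Longrightarrow> ell D (c ! k) + k = length ws" for k
  proof (induction k)
    case 0 then show ?case using c0 ew by simp
  next
    case (Suc k)
    then have "ell D (c ! k) = ell D (c ! Suc k) + 1" using cover_ell[OF cov] lc by simp
    then show ?case using Suc by simp
  qed
  show "\<forall>k \<le> length L. ell D (prodW (del_pos (set (take k L)) ws)) + k = length ws"
    using A ck lc by (metis Suc_eq_plus1 le_imp_less_Suc)
  have "last c = c ! length L" using cne lc by (simp add: last_conv_nth)
  then show "ell D x + length L = length ws" using A[of "length L"] lx by simp
qed

end

theorem lemmaA2:
  fixes R D :: "'v::euclidean_space set"
    and x w :: "'v \<Rightarrow> 'v" and ws cp cm :: "('v \<Rightarrow> 'v) list" and Lp Lm :: "nat list" and d :: nat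
  assumes "root_system R" and "is_base R D"
    and "x \<in> weyl R" and "w \<in> weyl R" and "bruhat R D x w"
    and "ell D w - ell D x = d" and "d \<ge> 1"
    and "reduced_word D ws w"
    and "max_chain R D cp w x" and "chain_label ws cp Lp" and "sorted_wrt (<) Lp"
    and "max_chain R D cm w x" and "chain_label ws cm Lm" and "sorted_wrt (>) Lm"
  shows "(last Lm = 1 \<longrightarrow>
            bruhat R D x (prodW (tl ws)) \<and>
            lam R D x (tl ws) = {i - 1 | i. i \<in> lam R D x ws \<and> i \<noteq> 1})
       \<and> (hd Lp > 1 \<longrightarrow>
            bruhat R D (hd ws \<circ> x) (prodW (tl ws)) \<and>
            {i - 1 | i. i \<in> lam R D x ws} \<subseteq> lam R D (hd ws \<circ> x) (tl ws))"
proof -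
  interpret rs R D using assms(1,2) by unfold_locales
  note bxw = assms(5)
  have rw: "wd ws" "prodW ws = w" "length ws = ell D w" using assms(8) by (auto simp: reduced_word_def)
  have cp1: "\<forall>k \<le> length Lp. ell D (prodW (del_pos (set (take k Lp)) ws)) + k = length ws"
    and cp2: "ell D x + length Lp = length ws" using chain_ok[OF assms(8,9,10)] by auto
  have cm1: "\<forall>k \<le> length Lm. ell D (prodW (del_pos (set (take k Lm)) ws)) + k = length ws"
    and cm2: "ell D x + length Lm = length ws" using chain_ok[OF assms(8,12,13)] by auto
  have lenp: "length Lp = d" using cp2 rw(3) assms(6) by linarith
  have lenm: "length Lm = d" using cm2 rw(3) assms(6) by linarith
  have Lpne: "Lp \<noteq> []" and Lmne: "Lm \<noteq> []" using lenp lenm assms(7) by auto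
  obtain s ws' where wsc: "ws = s # ws'" using rw(3) cp2 lenp assms(7) by (cases ws) auto
  obtain dd where dd: "dd \<in> D" "s = refl dd" using rw(1) wsc by auto
  have ws': "wd ws'" using rw(1) wsc by simp
  have hs: "hd ws = s" "tl ws = ws'" using wsc by auto
  have wW: "w \<in> weyl R" using assms(4) .
  have xW: "x \<in> weyl R" using assms(3) .
  have sw: "refl dd \<circ> w = prodW ws'" using rw(2) wsc dd left_invol by auto
  have sw_lt: "ell D (refl dd \<circ> w) < ell D w"
    using sw ell_le[OF ws'] rw(3) wsc by simp
  have setLp: "set Lp \<subseteq> {1..length ws}" using assms(10) by (simp add: chain_label_def)
  have setLm: "set Lm \<subseteq> {1..length ws}" using assms(13) by (simp add: chain_label_def)
  have xLp: "x = prodW (del_pos (set Lp) ws)"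
  proof -
    have lc: "length cp = Suc (length Lp)" and ck: "\<forall>k<length cp. cp ! k = prodW (del_pos (set (take k Lp)) ws)"
      using assms(10) by (auto simp: chain_label_def)
    have cne: "cp \<noteq> []" and lx: "last cp = x" using assms(9) by (auto simp: max_chain_def)
    have "last cp = cp ! length Lp" using cne lc by (simp add: last_conv_nth)
    also have "\<dots> = prodW (del_pos (set (take (length Lp) Lp)) ws)" using ck lc by simp
    finally show ?thesis using lx by simp
  qed
  have xLm: "x = prodW (del_pos (set Lm) ws)"
  proof -
    have lc: "length cm = Suc (length Lm)" and ck: "\<forall>k<length cm. cm ! k = prodW (del_pos (set (take k Lm)) ws)"
      using assms(13) by (auto simp: chain_label_def)
    have cne: "cm \<noteq> []" and lx: "last cm = x" using assms(12) by (auto simp: max_chain_def)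
    have "last cm = cm ! length Lm" using cne lc by (simp add: last_conv_nth)
    also have "\<dots> = prodW (del_pos (set (take (length Lm) Lm)) ws)" using ck lc by simp
    finally show ?thesis using lx by simp
  qed
  have udel: "\<And>j. 1 \<le> j \<Longrightarrow> prodW (del_pos {Suc j} ws) = refl dd \<circ> prodW (del_pos {j} ws')"
    using wsc dd by (simp add: del_pos_single_Cons)
  have uW: "\<And>j. prodW (del_pos {j} ws') \<in> weyl R" using word_weyl[OF wd_del_pos[OF ws']] .
  show ?thesis
  proof (intro conjI impI)
    assume l1: "last Lm = 1"
    define B where "B = butlast Lm"
    have LmB: "Lm = B @ [1]" using Lmne l1 unfolding B_def by (metis append_butlast_last_id)
    have "sorted_wrt (>) (B @ [1])" using assms(14) LmB by simp
    then have Bgt: "\<forall>y\<in>set B. 1 < y" by (simp add: sorted_wrt_append)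
    have lB: "length B = d - 1" using LmB lenm by simp
    define A' where "A' = {i. Suc i \<in> set B}"
    have e1: "del_pos (set B) ws = s # del_pos A' ws'" using Bgt wsc by (auto simp: del_pos_Cons A'_def)
    have e2: "del_pos (set Lm) ws = del_pos A' ws'"
    proof -
      have "del_pos (set Lm) ws = del_pos {i. Suc i \<in> set Lm} ws'" using LmB wsc by (simp add: del_pos_Cons)
      also have "\<dots> = del_pos A' ws'" by (rule del_pos_cong) (auto simp: A'_def LmB)
      finally show ?thesis .
    qed
    have "take (d - 1) Lm = B" using LmB lB by simp
    then have "ell D (prodW (del_pos (set B) ws)) + (d - 1) = length ws" using cm1 lenm by (metis diff_le_self)
    then have "ell D (refl dd \<circ> x) + (d - 1) = length ws" using e1 e2 xLm dd by simp
    then have lt: "ell D x < ell D (refl dd \<circ> x)" using cm2 lenm assms(7) by linarith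
    have b1: "bruhat R D x (prodW ws')" using L1[OF bxw dd(1) sw_lt lt] sw by simp
    show "bruhat R D x (prodW (tl ws))" using b1 hs by simp
    show "lam R D x (tl ws) = {i - 1 | i. i \<in> lam R D x ws \<and> i \<noteq> 1}"
    proof (rule set_eqI)
      fix j
      show "j \<in> lam R D x (tl ws) \<longleftrightarrow> j \<in> {i - 1 | i. i \<in> lam R D x ws \<and> i \<noteq> 1}"
      proof
        assume "j \<in> lam R D x (tl ws)"
        then have j: "1 \<le> j" "j \<le> length ws'" "bruhat R D x (prodW (del_pos {j} ws'))"
          using hs by (auto simp: lam_def)
        then have "bruhat R D x (prodW (del_pos {Suc j} ws))"
          using L_iff[OF xW uW dd(1) lt] udel by simp
        then have "Suc j \<in> lam R D x ws" using j wsc by (auto simp: lam_def)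
        then show "j \<in> {i - 1 | i. i \<in> lam R D x ws \<and> i \<noteq> 1}" using j by force
      next
        assume "j \<in> {i - 1 | i. i \<in> lam R D x ws \<and> i \<noteq> 1}"
        then obtain i where i: "i \<in> lam R D x ws" "i \<noteq> 1" "j = i - 1" by blast
        then have i2: "2 \<le> i" "i \<le> length ws" "bruhat R D x (prodW (del_pos {i} ws))"
          by (auto simp: lam_def)
        then have ij: "i = Suc j" "1 \<le> j" using i by auto
        then have "bruhat R D x (prodW (del_pos {j} ws'))"
          using L_iff[OF xW uW dd(1) lt] udel i2 by simp
        then show "j \<in> lam R D x (tl ws)" using i2 ij hs wsc by (auto simp: lam_def)
      qed
    qed
  next
    assume h1: "hd Lp > 1"
    have sLp: "\<forall>y\<in>set Lp. 1 < y" using sorted_hd_le[OF assms(11)] h1 by fastforce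
    have not1: "\<not> bruhat R D x (prodW (del_pos {1} ws))"
      using S[OF rw(1) assms(11) Lpne setLp cp1 _ h1] xLp by simp
    define A' where "A' = {i. Suc i \<in> set Lp}"
    have e1: "del_pos (set Lp) ws = s # del_pos A' ws'" using sLp wsc by (auto simp: del_pos_Cons A'_def)
    have sx: "refl dd \<circ> x = prodW (del_pos A' ws')" using e1 xLp dd left_invol by simp
    have "distinct Lp" using assms(11) strict_sorted_iff by blast
    then have cLp: "card (set Lp) = d" using lenp distinct_card by metis
    have "length (del_pos (set Lp) ws) = length ws - d"
      using setLp cLp by (simp add: del_pos_len card_Diff_subset)
    then have "length (del_pos A' ws') + 1 = length ws - d" using e1 by simp
    then have "ell D (refl dd \<circ> x) + 1 \<le> length ws - d" using sx ell_le[OF wd_del_pos[OF ws', of A']] by simp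
    then have lt: "ell D (refl dd \<circ> x) < ell D x" using cp2 lenp by linarith
    have b2: "bruhat R D (refl dd \<circ> x) (refl dd \<circ> w)" using L2[OF bxw dd(1) lt] .
    show "bruhat R D (hd ws \<circ> x) (prodW (tl ws))" using b2 sw hs dd by simp
    show "{i - 1 | i. i \<in> lam R D x ws} \<subseteq> lam R D (hd ws \<circ> x) (tl ws)"
    proof
      fix j assume "j \<in> {i - 1 | i. i \<in> lam R D x ws}"
      then obtain i where i: "i \<in> lam R D x ws" "j = i - 1" by blast
      then have i1: "1 \<le> i" "i \<le> length ws" "bruhat R D x (prodW (del_pos {i} ws))"
        by (auto simp: lam_def)
      have "i \<noteq> 1" using i1 not1 by auto
      then have ij: "i = Suc j" "1 \<le> j" using i i1 by auto
      have "bruhat R D (refl dd \<circ> x) (refl dd \<circ> prodW (del_pos {i} ws))" using L2[OF i1(3) dd(1) lt] .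
      moreover have "refl dd \<circ> prodW (del_pos {i} ws) = prodW (del_pos {j} ws')"
        using udel[OF ij(2)] ij(1) left_invol[OF dd(1)] by simp
      ultimately have "bruhat R D (refl dd \<circ> x) (prodW (del_pos {j} ws'))" by simp
      then show "j \<in> lam R D (hd ws \<circ> x) (tl ws)" using ij i1 hs wsc dd by (auto simp: lam_def)
    qed
  qed
qed


end
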